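(* Let $C$ be an $(n,(n-k)/2,\delta;\mu)_q$ convolutional code over $\mathbf F_q$ such that $C\subseteq C^\perp$ (Euclidean dual). Then there exists an $[(n,k,n\mu;\delta,d_f)]_q$ convolutional stabilizer code with $d_f=\mathrm{wt}(C^\perp\setminus C)$. It is pure if $\mathrm{wt}(C^\perp\setminus C)=\mathrm{wt}(C^\perp)$.
   Context: Classical convolutional codes: An $(n,k,\delta;\mu)_q$ convolutional code is a submodule $\{u(D)G(D)\}$ of $\mathbf F_q[D]^n$ generated by a right-invertible $G(D)=(g_{ij})\in\mathbf F_q[D]^{k\times n}$ with $\nu_i=\max_j\deg g_{ij}$, degree $\delta=\sum\nu_i$ equal to the maximal degree of a $k\times k$ minor, memory $\mu=\max\nu_i$. Weight = number of nonzero coefficients; for a set $A$, $\mathrm{wt}(A)$ is the minimal weight of a nonzero element. $\Gamma_q$ = finitely supported sequences over $\mathbf F_q$; $\sigma$ maps $(u_0,\dots,u_{n-1})\in\mathbf F_q[D]^n$ to the coefficients of $\sum_iD^iu_i(D^n)$; codes are identified with their images. Euclidean dual $C^\perp=\{u\in\Gamma_q:\sum_iu_iv_i=0\ \forall v\in C\}$. Quantum setup: $X(a)|x\rangle=|x+a\rangle$, $Z(b)|x\rangle=\omega^{\mathrm{tr}(bx)}|x\rangle$ on $\mathbf C^q$ ($\omega=e^{2\pi i/p}$, $p=\mathrm{char}\,\mathbf F_q$), $I=X(0)$. $P_t$ is the group generated by $((t+1)n+m)$-fold tensor products of the $X(a),Z(b)$, with center $Z_t$; $P_\infty$ the group of infinite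 tensor products with almost all factors $I$. For abelian $S_0\le P_0$, $S_t=\langle N\otimes I^{\otimes n},I^{\otimes tn}\otimes M: N\in S_{t-1},M\in S_0\rangle$, with conditions (S1) $I^{\otimes tn}\otimes M$, $N\otimes I^{\otimes tn}$ commute for $M,N\in S_0$, $t\ge1$; (S2) $\dim_{\mathbf F_q}S_tZ_t/Z_t=(t+1)(n-k)$; (S3) $S_t\cap Z_t$ trivial. $S=\langle I^{\otimes tn}\otimes M\otimes I^{\otimes\infty}\rangle$; its $+1$-eigenspace is an $[(n,k,m)]_q$ convolutional stabilizer code. Weight of $E\in P_\infty$ = number of non-identity factors; $d_f=\min\{\mathrm{wt}(e): e\in C_{P_\infty}(S)\setminus Z(P_\infty)S\}$. With normal basis $(\beta,\beta^q)$ of $\mathbf F_{q^2}/\mathbf F_q$, $\tau(\omega^cX(a_0)Z(b_0)\otimes\cdots)=(\beta a_0+\beta^qb_0,\dots)$; the degree of the quantum code is the degree of $\sigma^{-1}\tau(S)$. $[(n,k,m;\delta,d_f)]_q$ denotes a code of degree $\delta$ and free distance $d_f$. Pure: the stabilizer contains no element of weight less than $d_f$ other than scalars. *)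

theory Defs
  imports "HOL-Computational_Algebra.Polynomial" "HOL-Library.Cardinality"
          "Jordan_Normal_Form.Determinant" "Jordan_Normal_Form.DL_Submatrix"
begin

definition row_deg :: "'a::field poly mat \<Rightarrow> nat \<Rightarrow> nat" where
  "row_deg G i = Max (insert 0 {degree (G $$ (i,j)) | j. j < dim_col G})"

definition is_conv_code :: "nat \<Rightarrow> nat \<Rightarrow> nat \<Rightarrow> nat \<Rightarrow> 'a::field poly vec set \<Rightarrow> bool" where
  "is_conv_code n k \<delta> \<mu> C \<longleftrightarrow>
     (\<exists>G :: 'a poly mat. G \<in> carrier_mat k n \<and>
        (\<exists>H. H \<in> carrier_mat n k \<and> G * H = 1\<^sub>m k) \<and>
        C = {transpose_mat G *\<^sub>v u | u. u \<in> carrier_vec k} \<and>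
        \<delta> = (\<Sum>i<k. row_deg G i) \<and>
        \<delta> = Max {degree (det (submatrix G {..<k} J)) | J. J \<subseteq> {..<n} \<and> card J = k} \<and>
        \<mu> = Max (insert 0 (row_deg G ` {..<k})))"

text \<open>sigma: (u_0,...,u_{n-1}) maps to the coefficient sequence of sum_i D^i u_i(D^n).\<close>
definition sigma :: "nat \<Rightarrow> 'a::zero poly vec \<Rightarrow> nat \<Rightarrow> 'a" where
  "sigma n u j = coeff (u $ (j mod n)) (j div n)"

definition fsupp :: "(nat \<Rightarrow> 'a::zero) \<Rightarrow> bool" where
  "fsupp v \<longleftrightarrow> finite {i. v i \<noteq> 0}"

definition edual :: "(nat \<Rightarrow> 'a::field) set \<Rightarrow> (nat \<Rightarrow> 'a) set" where
  "edual A = {v. fsupp v \<and> (\<forall>w\<in>A. (\<Sum>i\<in>{i. v i \<noteq> 0}. v i * w i) = 0)}"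

definition seq_wt :: "(nat \<Rightarrow> 'a::zero) \<Rightarrow> nat" where
  "seq_wt v = card {i. v i \<noteq> 0}"

definition wt_set :: "(nat \<Rightarrow> 'a::zero) set \<Rightarrow> nat" where
  "wt_set A = Inf {seq_wt v | v. v \<in> A \<and> v \<noteq> (\<lambda>_. 0)}"

text \<open>An element omega^c X(a) Z(b) (infinite tensor product, almost all factors I) is
  represented by (c, a, b) with c in Z_p and a, b finitely supported.\<close>
type_synonym 'a pauli = "nat \<times> (nat \<Rightarrow> 'a) \<times> (nat \<Rightarrow> 'a)"

definition ext_deg :: "'a::{field,finite} itself \<Rightarrow> nat" where
  "ext_deg _ = (LEAST e. CARD('a) = CHAR('a) ^ e)"

definition tr :: "'a::{field,finite} \<Rightarrow> 'a" where
  "tr x = (\<Sum>i<ext_deg TYPE('a). x ^ (CHAR('a) ^ i))"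

definition trn :: "'a::{field,finite} \<Rightarrow> nat" where
  "trn x = (THE j. j < CHAR('a) \<and> of_nat j = tr x)"

definition phase :: "(nat \<Rightarrow> 'a::{field,finite}) \<Rightarrow> (nat \<Rightarrow> 'a) \<Rightarrow> nat" where
  "phase b a = (\<Sum>i\<in>{i. b i * a i \<noteq> 0}. trn (b i * a i))"

definition P_inf :: "'a::{field,finite} pauli set" where
  "P_inf = {(c,a,b). c < CHAR('a) \<and> fsupp a \<and> fsupp b}"

text \<open>Z(b) X(a') = omega^{tr(b a')} X(a') Z(b).\<close>
definition pmult :: "'a::{field,finite} pauli \<Rightarrow> 'a pauli \<Rightarrow> 'a pauli" where
  "pmult x y = (case x of (c,a,b) \<Rightarrow> case y of (c',a',b') \<Rightarrow>
     ((c + c' + phase b a') mod CHAR('a), (\<lambda>i. a i + a' i), (\<lambda>i. b i + b' i)))"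

definition pone :: "'a::zero pauli" where
  "pone = (0, (\<lambda>_. 0), (\<lambda>_. 0))"

definition pinv :: "'a::{field,finite} pauli \<Rightarrow> 'a pauli" where
  "pinv x = (case x of (c,a,b) \<Rightarrow>
     ((CHAR('a) - (c + phase b (\<lambda>i. - a i)) mod CHAR('a)) mod CHAR('a),
      (\<lambda>i. - a i), (\<lambda>i. - b i)))"

inductive_set gen :: "'a::{field,finite} pauli set \<Rightarrow> 'a pauli set" for A where
  gen_one: "pone \<in> gen A"
| gen_base: "x \<in> A \<Longrightarrow> x \<in> gen A"
| gen_inv: "x \<in> gen A \<Longrightarrow> pinv x \<in> gen A"
| gen_mult: "x \<in> gen A \<Longrightarrow> y \<in> gen A \<Longrightarrow> pmult x y \<in> gen A"

definition psupp :: "'a::zero pauli \<Rightarrow> nat set" where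
  "psupp x = (case x of (c,a,b) \<Rightarrow> {i. a i \<noteq> 0 \<or> b i \<noteq> 0})"

definition pwt :: "'a::zero pauli \<Rightarrow> nat" where
  "pwt x = card (psupp x)"

text \<open>P_t viewed inside P_infinity: operators on the first N qudits (N = (t+1)n+m).\<close>
definition paulis_on :: "nat \<Rightarrow> 'a::{field,finite} pauli set" where
  "paulis_on N = {x \<in> P_inf. psupp x \<subseteq> {..<N}}"

definition center_of :: "'a::{field,finite} pauli set \<Rightarrow> 'a pauli set" where
  "center_of A = {z \<in> A. \<forall>y\<in>A. pmult z y = pmult y z}"

definition centralizer_in :: "'a::{field,finite} pauli set \<Rightarrow> 'a pauli set \<Rightarrow> 'a pauli set" where
  "centralizer_in A S = {e \<in> A. \<forall>s\<in>S. pmult e s = pmult s e}"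

definition pshift :: "nat \<Rightarrow> 'a::zero pauli \<Rightarrow> 'a pauli" where
  "pshift s x = (case x of (c,a,b) \<Rightarrow>
     (c, (\<lambda>i. if s \<le> i then a (i - s) else 0), (\<lambda>i. if s \<le> i then b (i - s) else 0)))"

text \<open>S_t (N tensor I^{tensor n} is identified with N).\<close>
primrec Stab_t :: "nat \<Rightarrow> 'a::{field,finite} pauli set \<Rightarrow> nat \<Rightarrow> 'a pauli set" where
  "Stab_t n S0 0 = S0"
| "Stab_t n S0 (Suc t) = gen (Stab_t n S0 t \<union> pshift (Suc t * n) ` S0)"

definition Stab :: "nat \<Rightarrow> 'a::{field,finite} pauli set \<Rightarrow> 'a pauli set" where
  "Stab n S0 = gen (\<Union>t. pshift (t * n) ` S0)"

text \<open>Image of a set of Pauli operators in F_q^{2N} modulo phases (S_t Z_t / Z_t).\<close>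
definition pvec :: "'a pauli \<Rightarrow> (nat \<Rightarrow> 'a) \<times> (nat \<Rightarrow> 'a)" where
  "pvec x = snd x"

text \<open>F_q-dimension of S_t Z_t / Z_t equals d: this quotient is identified with
  pvec ` S_t (kernel of pvec on P_t is Z_t); it is an F_q-space of dimension d.\<close>
definition fq_dim_eq :: "'a::{field,finite} pauli set \<Rightarrow> nat \<Rightarrow> bool" where
  "fq_dim_eq S d \<longleftrightarrow>
     (\<forall>l::'a. \<forall>v\<in>pvec ` S. (\<lambda>i. l * fst v i, \<lambda>i. l * snd v i) \<in> pvec ` S) \<and>
     card (pvec ` S) = CARD('a) ^ d"

text \<open>S_0 abelian subgroup of P_0 satisfying (S1)-(S3); its +1-eigenspace is an
  [(n,k,m)]_q convolutional stabilizer code.\<close>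
definition conv_stab_code :: "nat \<Rightarrow> nat \<Rightarrow> nat \<Rightarrow> 'a::{field,finite} pauli set \<Rightarrow> bool" where
  "conv_stab_code n k m S0 \<longleftrightarrow>
     S0 \<subseteq> paulis_on (n + m) \<and> gen S0 = S0 \<and>
     (\<forall>x\<in>S0. \<forall>y\<in>S0. pmult x y = pmult y x) \<and>
     (\<forall>t\<ge>1. \<forall>M\<in>S0. \<forall>N\<in>S0. pmult (pshift (t * n) M) N = pmult N (pshift (t * n) M)) \<and>
     (\<forall>t. fq_dim_eq (Stab_t n S0 t) ((t + 1) * (n - k))) \<and>
     (\<forall>t. Stab_t n S0 t \<inter> center_of (paulis_on ((t + 1) * n + m)) = {pone})"

definition free_dist :: "nat \<Rightarrow> 'a::{field,finite} pauli set \<Rightarrow> nat" where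
  "free_dist n S0 = Inf (pwt ` (centralizer_in P_inf (Stab n S0) -
      {pmult z s | z s. z \<in> center_of P_inf \<and> s \<in> Stab n S0}))"

definition pure_code :: "nat \<Rightarrow> 'a::{field,finite} pauli set \<Rightarrow> bool" where
  "pure_code n S0 \<longleftrightarrow>
     (\<forall>s\<in>Stab n S0. pwt s < free_dist n S0 \<longrightarrow> s \<in> center_of P_inf)"

text \<open>tau, relative to the normal basis (beta, beta^q) of F_{q^2}/F_q, F_q embedded via emb.\<close>
definition tau :: "('a \<Rightarrow> 'b::{field,finite}) \<Rightarrow> 'b \<Rightarrow> 'a::{field,finite} pauli \<Rightarrow> nat \<Rightarrow> 'b" where
  "tau emb \<beta> x i = (case x of (c,a,b) \<Rightarrow> \<beta> * emb (a i) + \<beta> ^ CARD('a) * emb (b i))"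

definition qdegree_is :: "('a \<Rightarrow> 'b::{field,finite}) \<Rightarrow> 'b \<Rightarrow> nat \<Rightarrow> 'a::{field,finite} pauli set \<Rightarrow> nat \<Rightarrow> bool" where
  "qdegree_is emb \<beta> n S0 \<delta> \<longleftrightarrow>
     (\<exists>k' \<mu>' (M :: 'b poly vec set). is_conv_code n k' \<delta> \<mu>' M \<and>
        sigma n ` M = tau emb \<beta> ` Stab n S0)"

end

theory Submission
  imports Defs "Jordan_Normal_Form.Char_Poly"
begin

lemma ff_CHAR_pos: "CHAR('a::{field,finite}) > 0"
  by (rule finite_imp_CHAR_pos) simp

lemma ff_CHAR_prime: "prime CHAR('a::{field,finite})"
  using ff_CHAR_pos prime_CHAR_semidom by blast

lemma ff_pow_card: "(x::'a::{field,finite}) ^ CARD('a) = x"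
proof (cases "x = 0")
  case False
  have "x * (\<Prod>y\<in>UNIV-{0}. x * y) = x * x ^ (card (UNIV :: 'a set) - 1) * \<Prod>(UNIV-{0})"
    by (simp add: prod.distrib mult_ac)
  also have "x * x ^ (card (UNIV :: 'a set) - 1) = x ^ Suc (card (UNIV :: 'a set) - 1)"
    by (subst power_Suc) auto
  also have "Suc (card (UNIV :: 'a set) - 1) = card (UNIV :: 'a set)"
    using finite_UNIV_card_ge_0[where ?'a = 'a] by simp
  also have "(\<Prod>y\<in>UNIV-{0}. x * y) = (\<Prod>y\<in>UNIV-{0}. y)"
    by (rule prod.reindex_bij_witness[of _ "\<lambda>y. y / x" "\<lambda>y. x * y"]) (use False in auto)
  finally show ?thesis
    by simp
qed (use finite_UNIV_card_ge_0[where ?'a = 'a] in auto)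

lemma ff_of_nat_mod: "(of_nat (m mod CHAR('a)) :: 'a::{field,finite}) = of_nat m"
proof -
  have "(of_nat m :: 'a) = of_nat (m div CHAR('a) * CHAR('a) + m mod CHAR('a))" by simp
  also have "\<dots> = of_nat (m mod CHAR('a))" by (simp only: of_nat_add of_nat_mult of_nat_CHAR) simp
  finally show ?thesis by simp
qed

lemma ff_of_nat_eq_iff: "((of_nat m :: 'a::{field,finite}) = of_nat m') \<longleftrightarrow> m mod CHAR('a) = m' mod CHAR('a)"
proof -
  have *: "((of_nat m :: 'a) = of_nat m') \<longleftrightarrow> m mod CHAR('a) = m' mod CHAR('a)" if "m \<le> m'" for m m'
  proof -
    have "((of_nat m :: 'a) = of_nat m') \<longleftrightarrow> (of_nat (m' - m) :: 'a) = 0"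
      using that by (auto simp: of_nat_diff)
    also have "\<dots> \<longleftrightarrow> CHAR('a) dvd (m' - m)" by (rule of_nat_eq_0_iff_char_dvd)
    also have "\<dots> \<longleftrightarrow> m mod CHAR('a) = m' mod CHAR('a)"
      using that by (metis mod_eq_dvd_iff_nat)
    finally show ?thesis .
  qed
  show ?thesis
  proof (cases "m \<le> m'")
    case True then show ?thesis by (rule *)
  next
    case False then show ?thesis using *[of m' m] by auto
  qed
qed

lemma ff_of_nat_inj: "j < CHAR('a) \<Longrightarrow> j' < CHAR('a) \<Longrightarrow> (of_nat j :: 'a::{field,finite}) = of_nat j' \<Longrightarrow> j = j'"
  by (simp add: ff_of_nat_eq_iff)

lemma ff_fermat: "(of_nat j :: 'a::{field,finite}) ^ CHAR('a) = of_nat j"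
proof (induction j)
  case 0 then show ?case using ff_CHAR_pos[where 'a='a] by (simp add: power_0_left)
next
  case (Suc j)
  have "(of_nat (Suc j) :: 'a) ^ CHAR('a) = (of_nat j + 1) ^ CHAR('a)" by (simp add: add.commute)
  also have "\<dots> = of_nat j ^ CHAR('a) + 1 ^ CHAR('a)"
    by (rule freshmans_dream[OF ff_CHAR_prime refl])
  finally show ?case using Suc by simp
qed

lemma ff_prime_field_roots:
  assumes "(y::'a::{field,finite}) ^ CHAR('a) = y"
  shows "\<exists>j<CHAR('a). y = of_nat j"
proof -
  let ?p = "CHAR('a)"
  have p2: "?p \<ge> 2" using ff_CHAR_prime[where 'a='a] prime_ge_2_nat by blast
  define P :: "'a poly" where "P = monom 1 ?p - monom 1 1"
  have "coeff P ?p = 1" using p2 by (simp add: P_def)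
  hence P0: "P \<noteq> 0" by auto
  have dP: "degree P \<le> ?p" unfolding P_def
    by (rule degree_diff_le) (use degree_monom_le[of "1::'a" ?p] degree_monom_le[of "1::'a" 1] p2 in auto)
  have rootsP: "{x. poly P x = 0} = {x. x ^ ?p = x}"
    by (auto simp: P_def poly_monom)
  have fin: "finite {x::'a. x ^ ?p = x}" by simp
  have sub: "of_nat ` {..<?p} \<subseteq> {x::'a. x ^ ?p = x}" using ff_fermat by auto
  have ci: "card (of_nat ` {..<?p} :: 'a set) = ?p"
    by (subst card_image) (auto intro!: inj_onI ff_of_nat_inj)
  have "card {x::'a. x ^ ?p = x} \<le> ?p"
    using card_poly_roots_bound[OF P0] dP rootsP by simp
  hence "of_nat ` {..<?p} = {x::'a. x ^ ?p = x}"
    using card_subset_eq[OF fin sub] ci card_mono[OF fin sub] by simp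
  with assms show ?thesis by auto
qed

lemma ff_minus_pow: "((a::'a::{field,finite}) - b) ^ CHAR('a) = a ^ CHAR('a) - b ^ CHAR('a)"
proof -
  have "(a - b + b) ^ CHAR('a) = (a - b) ^ CHAR('a) + b ^ CHAR('a)"
    by (rule freshmans_dream[OF ff_CHAR_prime refl])
  then show ?thesis by simp
qed

definition addclosed :: "'a::ab_group_add set \<Rightarrow> bool" where
  "addclosed V \<longleftrightarrow> 0 \<in> V \<and> (\<forall>x\<in>V. \<forall>y\<in>V. x + y \<in> V) \<and> (\<forall>x\<in>V. - x \<in> V)"

lemma addclosed_of_nat: "addclosed V \<Longrightarrow> x \<in> V \<Longrightarrow> (of_nat j :: 'a::field) * x \<in> V"
  by (induction j) (auto simp: addclosed_def distrib_right)

lemma ff_ext_step: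
  fixes V :: "'a::{field,finite} set"
  assumes ac: "addclosed V" and y: "y \<notin> V"
  defines "V' \<equiv> (\<lambda>(j,v). of_nat j * y + v) ` ({..<CHAR('a)} \<times> V)"
  shows "addclosed V' \<and> V \<subset> V' \<and> card V' = CHAR('a) * card V"
proof -
  let ?p = "CHAR('a)"
  have p2: "?p \<ge> 2" using ff_CHAR_prime[where 'a='a] prime_ge_2_nat by blast
  have inj: "inj_on (\<lambda>(j,v). of_nat j * y + v) ({..<?p} \<times> V)"
  proof (rule inj_onI, clarify)
    fix j v j' v' assume j: "j < ?p" and v: "v \<in> V" and j': "j' < ?p" and v': "v' \<in> V"
      and eq: "(of_nat j :: 'a) * y + v = of_nat j' * y + v'"
    show "j = j' \<and> v = v'"
    proof (cases "j = j'")
      case True then show ?thesis using eq by simp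
    next
      case False
      define c :: 'a where "c = of_nat j - of_nat j'"
      have c0: "c \<noteq> 0" using False ff_of_nat_inj[OF j j'] by (auto simp: c_def)
      have cp: "c ^ ?p = c" by (simp add: c_def ff_minus_pow ff_fermat)
      have "inverse c ^ ?p = inverse c" by (simp add: power_inverse cp)
      then obtain m where m: "inverse c = of_nat m" using ff_prime_field_roots by blast
      have "c * y = v' - v" using eq by (simp add: c_def algebra_simps)
      hence "y = inverse c * (v' - v)" using c0 by (simp add: field_simps)
      also have "\<dots> = of_nat m * (v' + - v)" by (simp add: m)
      also have "\<dots> \<in> V" using ac v v' unfolding addclosed_def by (intro addclosed_of_nat[OF ac]) blast
      finally show ?thesis using y by simp
    qed
  qed
  have fin: "finite V" by simp
  have card: "card V' = ?p * card V"
    unfolding V'_def by (subst card_image[OF inj]) (simp add: card_cartesian_product)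
  have sub: "V \<subseteq> V'"
  proof
    fix v assume "v \<in> V"
    then have "(0, v) \<in> {..<?p} \<times> V" using p2 by auto
    then show "v \<in> V'" unfolding V'_def by (force intro: image_eqI[where x="(0,v)"])
  qed
  have yV': "y \<in> V'"
  proof -
    have "(1, 0) \<in> {..<?p} \<times> V" using p2 ac by (auto simp: addclosed_def)
    then show ?thesis unfolding V'_def by (force intro: image_eqI[where x="(1,0)"])
  qed
  have ac': "addclosed V'"
    unfolding addclosed_def
  proof (intro conjI ballI)
    show "0 \<in> V'" using sub ac by (auto simp: addclosed_def)
  next
    fix x z assume "x \<in> V'" "z \<in> V'"
    then obtain j v j' v' where jv: "j < ?p" "v \<in> V" "x = of_nat j * y + v"
      and jv': "j' < ?p" "v' \<in> V" "z = of_nat j' * y + v'" unfolding V'_def by auto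
    have "x + z = of_nat ((j + j') mod ?p) * y + (v + v')"
      using jv jv' by (simp add: ff_of_nat_mod algebra_simps)
    moreover have "((j + j') mod ?p, v + v') \<in> {..<?p} \<times> V"
      using jv jv' ac p2 by (auto simp: addclosed_def)
    ultimately show "x + z \<in> V'" unfolding V'_def by force
  next
    fix x assume "x \<in> V'"
    then obtain j v where jv: "j < ?p" "v \<in> V" "x = of_nat j * y + v" unfolding V'_def by auto
    have "(of_nat ((?p - j) mod ?p) :: 'a) = of_nat (?p - j)" by (rule ff_of_nat_mod)
    also have "\<dots> = - of_nat j" using jv(1) by (simp add: of_nat_diff)
    finally have "- x = of_nat ((?p - j) mod ?p) * y + (- v)" using jv by (simp add: algebra_simps)
    moreover have "((?p - j) mod ?p, - v) \<in> {..<?p} \<times> V"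
      using jv ac p2 by (auto simp: addclosed_def)
    ultimately show "- x \<in> V'" unfolding V'_def by force
  qed
  show ?thesis using ac' sub yV' y card by auto
qed

lemma ff_card_prime_power: "\<exists>e. CARD('a::{field,finite}) = CHAR('a) ^ e"
proof -
  have main: "\<And>V::'a set. CARD('a) - card V = d \<Longrightarrow> addclosed V \<Longrightarrow> card V = CHAR('a) ^ e \<Longrightarrow> \<exists>e'. CARD('a) = CHAR('a) ^ e'" for d e
  proof (induction d arbitrary: e rule: less_induct)
    case (less d V e)
    show ?case
    proof (cases "V = UNIV")
      case True then show ?thesis using less by auto
    next
      case False
      then obtain y where y: "y \<notin> V" by auto
      define V' where "V' = (\<lambda>(j,v). of_nat j * y + (v::'a)) ` ({..<CHAR('a)} \<times> V)"
      have st: "addclosed V' \<and> V \<subset> V' \<and> card V' = CHAR('a) * card V"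
        using ff_ext_step[OF less.prems(2) y] unfolding V'_def by blast
      have "card V < card V'" using st by (intro psubset_card_mono) simp_all
      moreover have "card V' \<le> CARD('a)" by (simp add: card_mono)
      ultimately have "CARD('a) - card V' < d" using less.prems(1) by linarith
      moreover have "card V' = CHAR('a) ^ Suc e" using st less.prems(3) by simp
      ultimately show ?thesis using less.IH st by blast
    qed
  qed
  have "addclosed {0::'a}" by (simp add: addclosed_def)
  then show ?thesis using main[of "{0::'a}" _ 0] by simp
qed


lemma ext_deg_prop: "CARD('a) = CHAR('a) ^ ext_deg TYPE('a::{field,finite})"
  unfolding ext_deg_def using ff_card_prime_power[where 'a='a] by (rule LeastI_ex)

lemma ext_deg_pos: "ext_deg TYPE('a::{field,finite}) > 0"
proof (rule ccontr)
  assume "\<not> ?thesis"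
  then have "CARD('a) = 1" using ext_deg_prop[where 'a='a] by simp
  moreover have "card {0::'a, 1} \<le> CARD('a)" by (rule card_mono) auto
  ultimately show False by simp
qed

lemma tr_add: "tr ((x::'a::{field,finite}) + y) = tr x + tr y"
  unfolding tr_def by (simp add: freshmans_dream'[OF ff_CHAR_prime refl] sum.distrib)

lemma tr_zero: "tr (0::'a::{field,finite}) = 0"
  unfolding tr_def using ff_CHAR_pos[where 'a='a] by (simp add: power_0_left)

lemma tr_sum: "tr (sum f A) = (\<Sum>i\<in>A. tr (f i :: 'a::{field,finite}))"
  by (induction A rule: infinite_finite_induct) (simp_all add: tr_zero tr_add)

lemma tr_pow: "tr (x::'a::{field,finite}) ^ CHAR('a) = tr x"
proof -
  let ?p = "CHAR('a)" and ?e = "ext_deg TYPE('a)"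
  define f where "f i = x ^ (?p ^ i)" for i
  obtain e' where e': "?e = Suc e'" using ext_deg_pos[where 'a='a] gr0_conv_Suc by blast
  have fe: "f (Suc e') = f 0" unfolding f_def using ext_deg_prop[where 'a='a] ff_pow_card[of x] e' by simp
  have "tr x ^ ?p = (\<Sum>i<?e. f i ^ ?p)" unfolding tr_def f_def
    by (rule freshmans_dream_sum[OF ff_CHAR_prime refl])
  also have "\<dots> = (\<Sum>i<?e. f (Suc i))" by (simp add: f_def power_mult[symmetric] mult.commute)
  also have "\<dots> = (\<Sum>i<e'. f (Suc i)) + f 0" by (simp add: e' fe)
  also have "\<dots> = (\<Sum>i<?e. f i)" unfolding e' by (subst sum.lessThan_Suc_shift) simp
  finally show ?thesis by (simp add: tr_def f_def)
qed

lemma trn_prop: "trn (x::'a::{field,finite}) < CHAR('a) \<and> of_nat (trn x) = tr x"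
proof -
  obtain j where j: "j < CHAR('a)" "tr x = of_nat j" using ff_prime_field_roots[OF tr_pow] by blast
  have "\<exists>!j. j < CHAR('a) \<and> of_nat j = tr x"
    using j ff_of_nat_inj[where 'a='a] by metis
  then show ?thesis unfolding trn_def by (rule theI') 
qed

lemma tr_nonzero: "\<exists>z::'a::{field,finite}. tr z \<noteq> 0"
proof (rule ccontr)
  assume "\<not> ?thesis"
  then have all: "\<And>z::'a. tr z = 0" by blast
  let ?p = "CHAR('a)" and ?e = "ext_deg TYPE('a)"
  have p2: "?p \<ge> 2" using ff_CHAR_prime[where 'a='a] prime_ge_2_nat by blast
  define Q :: "'a poly" where "Q = (\<Sum>i<?e. monom 1 (?p ^ i))"
  have pQ: "poly Q z = tr z" for z by (simp add: Q_def tr_def poly_sum poly_monom)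
  have "coeff Q (?p ^ (?e - 1)) = (\<Sum>i<?e. if i = ?e - 1 then 1 else 0)"
    unfolding Q_def coeff_sum coeff_monom
    by (intro sum.cong refl) (use p2 power_inject_exp in auto)
  also have "\<dots> = 1" using ext_deg_pos[where 'a='a] by simp
  finally have Q0: "Q \<noteq> 0" by auto
  have dQ: "degree Q \<le> ?p ^ (?e - 1)" unfolding Q_def
  proof (rule degree_sum_le)
    fix i assume "i \<in> {..<?e}"
    then have "?p ^ i \<le> ?p ^ (?e - 1)" using p2 by (intro power_increasing) auto
    then show "degree (monom (1::'a) (?p ^ i)) \<le> ?p ^ (?e - 1)" using degree_monom_le order_trans by blast
  qed simp
  have "?p ^ (?e - 1) < ?p ^ ?e" using p2 ext_deg_pos[where 'a='a] by (intro power_strict_increasing) auto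
  have "card {z. poly Q z = 0} \<le> degree Q" by (rule card_poly_roots_bound[OF Q0])
  moreover have "{z. poly Q z = 0} = UNIV" using all pQ by auto
  ultimately show False using dQ `?p ^ (?e - 1) < ?p ^ ?e` ext_deg_prop[where 'a='a] by simp
qed

definition dotp :: "(nat \<Rightarrow> 'a::field) \<Rightarrow> (nat \<Rightarrow> 'a) \<Rightarrow> 'a" where
  "dotp b a = (\<Sum>i\<in>{i. b i * a i \<noteq> 0}. b i * a i)"

lemma phase_tr: "(of_nat (phase b a) :: 'a::{field,finite}) = tr (dotp b a)"
proof -
  have "(of_nat (trn x) :: 'a) = tr x" for x :: 'a using trn_prop by blast
  then show ?thesis unfolding phase_def dotp_def of_nat_sum tr_sum by simp
qed

lemma pmult_comm_iff:
  "pmult ((c,a,b)::'a::{field,finite} pauli) (c',a',b') = pmult (c',a',b') (c,a,b) \<longleftrightarrow>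
   tr (dotp b a') = tr (dotp b' a)"
proof -
  have "pmult ((c,a,b)::'a pauli) (c',a',b') = pmult (c',a',b') (c,a,b) \<longleftrightarrow>
     (c + c' + phase b a') mod CHAR('a) = (c + c' + phase b' a) mod CHAR('a)"
    by (auto simp: pmult_def add.commute add.left_commute)
  also have "\<dots> \<longleftrightarrow> (of_nat (c + c' + phase b a') :: 'a) = of_nat (c + c' + phase b' a)"
    by (rule ff_of_nat_eq_iff[symmetric])
  also have "\<dots> \<longleftrightarrow> tr (dotp b a') = tr (dotp b' a)"
    by (simp add: phase_tr[symmetric] add.commute)
  finally show ?thesis .
qed

definition sh :: "nat \<Rightarrow> (nat \<Rightarrow> 'a::zero) \<Rightarrow> nat \<Rightarrow> 'a" where
  "sh s a = (\<lambda>i. if s \<le> i then a (i - s) else 0)"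

definition ipv :: "(nat \<Rightarrow> 'a::field) \<Rightarrow> (nat \<Rightarrow> 'a) \<Rightarrow> 'a" where
  "ipv v w = (\<Sum>i\<in>{i. v i \<noteq> 0}. v i * w i)"

definition TT :: "(nat \<Rightarrow> 'a::{field,finite}) set \<Rightarrow> 'a pauli set" where
  "TT V = {(0, a, b) | a b. a \<in> V \<and> b \<in> V}"

lemma edual_ipv: "edual A = {v. fsupp v \<and> (\<forall>w\<in>A. ipv v w = 0)}"
  unfolding edual_def ipv_def by simp

lemma pshift_0a: "pshift s (c, a, b) = (c, sh s a, sh s b)"
  by (simp add: pshift_def sh_def)

lemma sh_zero[simp]: "sh s (\<lambda>_. 0) = (\<lambda>_. 0)"
  by (simp add: sh_def)

lemma sh_0[simp]: "sh 0 a = a"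
  by (simp add: sh_def)

lemma pshift_0[simp]: "pshift 0 x = x"
  by (cases x) (simp add: pshift_def)

lemma dotp_ipv: "fsupp b \<Longrightarrow> dotp b a = ipv b a"
  unfolding dotp_def ipv_def fsupp_def
  by (rule sum.mono_neutral_left) auto

lemma dotp_comm: "dotp b a = dotp a (b :: nat \<Rightarrow> 'a::field)"
  unfolding dotp_def by (simp add: mult.commute)

lemma dotp_zero1[simp]: "dotp (\<lambda>_. 0) a = 0" and dotp_zero2[simp]: "dotp b (\<lambda>_. 0) = 0"
  by (simp_all add: dotp_def)

lemma ipv_add2: "fsupp v \<Longrightarrow> ipv v (\<lambda>i. w i + w' i) = ipv v w + ipv v w'"
  unfolding ipv_def by (simp add: distrib_left sum.distrib)

lemma ipv_scale2: "ipv v (\<lambda>i. l * w i) = l * ipv v w"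
  unfolding ipv_def by (simp add: sum_distrib_left mult.left_commute)

lemma ipv_zero1[simp]: "ipv (\<lambda>_. 0) w = 0"
  by (simp add: ipv_def)

lemma phase_mod0:
  assumes "fsupp b" "ipv b a = (0::'a::{field,finite})"
  shows "phase b a mod CHAR('a) = 0"
proof -
  have "(of_nat (phase b a) :: 'a) = 0"
    using assms by (simp add: phase_tr dotp_ipv tr_zero)
  then show ?thesis using of_nat_eq_0_iff_char_dvd[where 'a='a] by (simp add: dvd_eq_mod_eq_0)
qed

lemma phase_zero1[simp]: "phase (\<lambda>_. 0) a = 0" and phase_zero2[simp]: "phase b (\<lambda>_. 0) = 0"
  by (simp_all add: phase_def)

lemma gen_sub: assumes "A \<subseteq> gen B" shows "gen A \<subseteq> gen B"
proof
  fix x assume "x \<in> gen A"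
  then show "x \<in> gen B" by (induction x rule: gen.induct) (use assms in \<open>auto intro: gen.intros\<close>)
qed

lemma gen_incl: "A \<subseteq> gen A"
  by (auto intro: gen.intros)

lemma gen_closed:
  assumes "A \<subseteq> T" "pone \<in> T" "\<And>x. x \<in> T \<Longrightarrow> pinv x \<in> T"
    "\<And>x y. x \<in> T \<Longrightarrow> y \<in> T \<Longrightarrow> pmult x y \<in> T"
  shows "gen A \<subseteq> T"
proof
  fix x assume "x \<in> gen A"
  then show "x \<in> T" by (induction x rule: gen.induct) (use assms in auto)
qed

lemma noncentral_witness:
  fixes a b :: "nat \<Rightarrow> 'a::{field,finite}"
  assumes "a i \<noteq> 0 \<or> b i \<noteq> 0"
  shows "\<exists>y\<in>P_inf. psupp y \<subseteq> {i} \<and> pmult (c, a, b) y \<noteq> pmult y (c, a, b)"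
proof -
  obtain z :: 'a where z: "tr z \<noteq> 0" using tr_nonzero by blast
  have p0: "0 < CHAR('a)" by (rule ff_CHAR_pos)
  show ?thesis
  proof (cases "a i \<noteq> 0")
    case True
    define e where "e = (\<lambda>j. if j = i then z / a i else (0::'a))"
    have "{j. e j * a j \<noteq> 0} \<subseteq> {i}" by (auto simp: e_def)
    then have "dotp e a = (\<Sum>j\<in>{i}. e j * a j)" unfolding dotp_def
      by (intro sum.mono_neutral_left) auto
    then have de: "dotp e a = z" using True by (simp add: e_def)
    have y: "(0, \<lambda>_. 0, e) \<in> P_inf" using p0 by (auto simp: P_inf_def fsupp_def e_def)
    have "psupp (0, \<lambda>_. 0, e) \<subseteq> {i}" by (auto simp: psupp_def e_def split: if_splits)
    moreover have "pmult (c, a, b) (0, \<lambda>_. 0, e) \<noteq> pmult (0, \<lambda>_. 0, e) (c, a, b)"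
      unfolding pmult_comm_iff using de z by (simp add: tr_zero)
    ultimately show ?thesis using y by blast
  next
    case False
    then have bi: "b i \<noteq> 0" using assms by auto
    define e where "e = (\<lambda>j. if j = i then z / b i else (0::'a))"
    have "{j. b j * e j \<noteq> 0} \<subseteq> {i}" by (auto simp: e_def)
    then have "dotp b e = (\<Sum>j\<in>{i}. b j * e j)" unfolding dotp_def
      by (intro sum.mono_neutral_left) auto
    then have de: "dotp b e = z" using bi by (simp add: e_def)
    have y: "(0, e, \<lambda>_. 0) \<in> P_inf" using p0 by (auto simp: P_inf_def fsupp_def e_def)
    have "psupp (0, e, \<lambda>_. 0) \<subseteq> {i}" by (auto simp: psupp_def e_def split: if_splits)
    moreover have "pmult (c, a, b) (0, e, \<lambda>_. 0) \<noteq> pmult (0, e, \<lambda>_. 0) (c, a, b)"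
      unfolding pmult_comm_iff using de z by (simp add: tr_zero)
    ultimately show ?thesis using y by blast
  qed
qed

lemma pone_comm: "pmult pone y = pmult y (pone :: 'a::{field,finite} pauli)"
  by (cases y) (simp add: pone_def pmult_comm_iff)

lemma pone_P_inf: "pone \<in> (P_inf :: 'a::{field,finite} pauli set)"
  using ff_CHAR_pos[where 'a='a] by (simp add: pone_def P_inf_def fsupp_def)

lemma psupp_pone[simp]: "psupp pone = {}"
  by (simp add: pone_def psupp_def)

lemma center_P_inf: "center_of (P_inf :: 'a::{field,finite} pauli set) = {(c, \<lambda>_. 0, \<lambda>_. 0) | c. c < CHAR('a)}"
proof (intro equalityI subsetI)
  fix x :: "'a pauli" assume x: "x \<in> center_of P_inf"
  obtain c a b where xe: "x = (c, a, b)" by (cases x) auto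
  have "a i = 0 \<and> b i = 0" for i
    using noncentral_witness[of a i b c] x xe unfolding center_of_def by auto
  then show "x \<in> {(c, \<lambda>_. 0, \<lambda>_. 0) | c. c < CHAR('a)}" using x xe
    by (auto simp: center_of_def P_inf_def)
next
  fix x :: "'a pauli" assume "x \<in> {(c, \<lambda>_. 0, \<lambda>_. 0) | c. c < CHAR('a)}"
  then obtain c where "x = (c, \<lambda>_. 0, \<lambda>_. 0)" "c < CHAR('a)" by auto
  then show "x \<in> center_of P_inf"
    by (auto simp: center_of_def P_inf_def fsupp_def pmult_comm_iff)
qed

lemma center_paulis_on: "x \<in> center_of (paulis_on N :: 'a::{field,finite} pauli set) \<Longrightarrow> fst (snd x) = (\<lambda>_. 0) \<and> snd (snd x) = (\<lambda>_. 0)"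
proof -
  assume x: "x \<in> center_of (paulis_on N)"
  obtain c a b where xe: "x = (c, a, b)" by (cases x) auto
  have "a i = 0 \<and> b i = 0" for i
  proof (rule ccontr)
    assume "\<not> (a i = 0 \<and> b i = 0)"
    then have ai: "a i \<noteq> 0 \<or> b i \<noteq> 0" by auto
    then have "i \<in> psupp x" by (auto simp: xe psupp_def)
    then have "i < N" using x by (auto simp: center_of_def paulis_on_def)
    obtain y where "y \<in> P_inf" "psupp y \<subseteq> {i}" "pmult (c, a, b) y \<noteq> pmult y (c, a, b)"
      using noncentral_witness[of a i b c] ai by blast
    moreover have "y \<in> paulis_on N" using calculation `i < N` by (auto simp: paulis_on_def)
    ultimately show False using x xe by (auto simp: center_of_def)
  qed
  then show ?thesis by (auto simp: xe)
qed

lemma psupp_fin: "fsupp a \<Longrightarrow> fsupp b \<Longrightarrow> finite (psupp (c, a, b))"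
proof -
  assume "fsupp a" "fsupp b"
  moreover have "psupp (c, a, b) = {i. a i \<noteq> 0} \<union> {i. b i \<noteq> 0}" by (auto simp: psupp_def)
  ultimately show ?thesis by (simp add: fsupp_def)
qed

lemma inf_eq_nat:
  fixes A B :: "nat set"
  assumes "B \<subseteq> A" "\<And>x. x \<in> A \<Longrightarrow> \<exists>y\<in>B. y \<le> x"
  shows "Inf A = Inf B"
proof (cases "A = {}")
  case True then show ?thesis using assms by auto
next
  case False
  then have IA: "Inf A \<in> A" by (rule Inf_nat_def1)
  then obtain y where y: "y \<in> B" "y \<le> Inf A" using assms by blast
  have "Inf B \<le> y" using y by (simp add: cInf_lower)
  moreover have "Inf A \<le> Inf B" using y assms(1) by (metis Inf_nat_def1 cInf_lower bdd_below_bot empty_iff subsetD)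
  ultimately show ?thesis using y by linarith
qed


locale qsetup =
  fixes n m k k' :: nat and L :: "(nat \<Rightarrow> 'a::{field,finite}) set" and W :: "nat \<Rightarrow> (nat \<Rightarrow> 'a) set"
  assumes W_zero: "(\<lambda>_. 0) \<in> W t"
  and W_add: "x \<in> W t \<Longrightarrow> y \<in> W t \<Longrightarrow> (\<lambda>i. x i + y i) \<in> W t"
  and W_scale: "x \<in> W t \<Longrightarrow> (\<lambda>i. l * x i) \<in> W t"
  and W_Suc: "W (Suc t) = {\<lambda>i. x i + sh (Suc t * n) y i | x y. x \<in> W t \<and> y \<in> W 0}"
  and W_supp: "x \<in> W t \<Longrightarrow> x i \<noteq> 0 \<Longrightarrow> i < (t + 1) * n + m"
  and W_card: "card (W t) = CARD('a) ^ ((t + 1) * k')"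
  and nk: "n - k = 2 * k'"
  and L_def: "L = (\<Union>t. W t)"
  and orth: "v \<in> L \<Longrightarrow> w \<in> L \<Longrightarrow> ipv v w = 0"
begin

lemma W_fsupp: "x \<in> W t \<Longrightarrow> fsupp x"
  unfolding fsupp_def by (rule finite_subset[of _ "{..<(t + 1) * n + m}"]) (auto dest: W_supp)

lemma W_SucI: "x \<in> W t \<Longrightarrow> y \<in> W 0 \<Longrightarrow> (\<lambda>i. x i + sh (Suc t * n) y i) \<in> W (Suc t)"
  using W_Suc by blast

lemma W_Suc_mono: "W t \<subseteq> W (Suc t)"
proof
  fix x assume "x \<in> W t"
  then have "(\<lambda>i. x i + sh (Suc t * n) (\<lambda>_. 0) i) \<in> W (Suc t)"
    using W_zero[of 0] by (rule W_SucI)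
  then show "x \<in> W (Suc t)" by simp
qed

lemma W_mono: "t \<le> t' \<Longrightarrow> W t \<subseteq> W t'"
  by (induction t' rule: dec_induct) (use W_Suc_mono in auto)

lemma W_neg: "x \<in> W t \<Longrightarrow> (\<lambda>i. - x i) \<in> W t"
  using W_scale[of x t "-1"] by simp

lemma W_L: "W t \<subseteq> L"
  unfolding L_def by auto

lemma L_fsupp: "x \<in> L \<Longrightarrow> fsupp x"
  unfolding L_def using W_fsupp by auto

lemma L_zero: "(\<lambda>_. 0) \<in> L"
  using W_zero W_L by blast

lemma L_add: "x \<in> L \<Longrightarrow> y \<in> L \<Longrightarrow> (\<lambda>i. x i + y i) \<in> L"
proof -
  assume "x \<in> L" "y \<in> L"
  then obtain t t' where "x \<in> W t" "y \<in> W t'" unfolding L_def by auto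
  then have "x \<in> W (max t t')" "y \<in> W (max t t')" using W_mono[of t "max t t'"] W_mono[of t' "max t t'"] by auto
  then show ?thesis using W_add W_L by blast
qed

lemma L_scale: "x \<in> L \<Longrightarrow> (\<lambda>i. l * x i) \<in> L"
  unfolding L_def using W_scale by blast

lemma L_neg: "x \<in> L \<Longrightarrow> (\<lambda>i. - x i) \<in> L"
  unfolding L_def using W_neg by blast

lemma sh_W: "y \<in> W 0 \<Longrightarrow> sh (t * n) y \<in> W t"
proof (cases t)
  case (Suc t')
  assume y: "y \<in> W 0"
  have "(\<lambda>i. (\<lambda>_. 0) i + sh (Suc t' * n) y i) \<in> W (Suc t')"
    using W_zero[of t'] y by (rule W_SucI)
  then show ?thesis using Suc by simp
qed simp

lemma L_sub_dual: "L \<subseteq> edual L"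
  unfolding edual_ipv using orth L_fsupp by auto

lemma pmult_TT:
  assumes "a \<in> L" "b \<in> L" "a' \<in> L" "b' \<in> L"
  shows "pmult (0, a, b) (0, a', b') = (0, \<lambda>i. a i + a' i, \<lambda>i. b i + b' i)"
  using phase_mod0[OF L_fsupp[OF assms(2)] orth[OF assms(2,3)]] by (simp add: pmult_def)

lemma pinv_TT:
  assumes "a \<in> L" "b \<in> L"
  shows "pinv (0, a, b) = (0, \<lambda>i. - a i, \<lambda>i. - b i)"
proof -
  have "phase b (\<lambda>i. - a i) mod CHAR('a) = 0"
    using phase_mod0[OF L_fsupp[OF assms(2)] orth[OF assms(2) L_neg[OF assms(1)]]] .
  then show ?thesis by (simp add: pinv_def)
qed

lemma TT_comm:
  assumes "x \<in> TT L" "y \<in> TT L"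
  shows "pmult x y = pmult y x"
proof -
  obtain a b a' b' where e: "x = (0, a, b)" "y = (0, a', b')" "a \<in> L" "b \<in> L" "a' \<in> L" "b' \<in> L"
    using assms unfolding TT_def by auto
  then show ?thesis by (simp add: pmult_TT add.commute)
qed

lemma TT_closed:
  assumes VL: "V \<subseteq> L" and V0: "(\<lambda>_. 0) \<in> V" and Vadd: "\<And>x y. x \<in> V \<Longrightarrow> y \<in> V \<Longrightarrow> (\<lambda>i. x i + y i) \<in> V"
    and Vneg: "\<And>x. x \<in> V \<Longrightarrow> (\<lambda>i. - x i) \<in> V" and A: "A \<subseteq> TT V"
  shows "gen A \<subseteq> TT V"
proof (rule gen_closed[OF A])
  show "pone \<in> TT V" using V0 by (auto simp: TT_def pone_def)
next
  fix x assume "x \<in> TT V"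
  then obtain a b where ab: "x = (0, a, b)" "a \<in> V" "b \<in> V" unfolding TT_def by auto
  then have "a \<in> L" "b \<in> L" using VL by auto
  then show "pinv x \<in> TT V" using ab Vneg by (auto simp: pinv_TT TT_def)
next
  fix x y assume "x \<in> TT V" "y \<in> TT V"
  then obtain a b a' b' where "x = (0, a, b)" "y = (0, a', b')" "a \<in> V" "b \<in> V" "a' \<in> V" "b' \<in> V"
    unfolding TT_def by auto
  moreover then have "a \<in> L" "b \<in> L" "a' \<in> L" "b' \<in> L" using VL by auto
  ultimately show "pmult x y \<in> TT V" using Vadd by (auto simp: pmult_TT TT_def)
qed

lemma gen_TT_W: "A \<subseteq> TT (W t) \<Longrightarrow> gen A \<subseteq> TT (W t)"
  by (rule TT_closed) (use W_L W_zero W_add W_neg in auto)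

lemma gen_TT_L: "A \<subseteq> TT L \<Longrightarrow> gen A \<subseteq> TT L"
  by (rule TT_closed) (use L_zero L_add L_neg in auto)

abbreviation "S0 \<equiv> TT (W 0)"

lemma Stab_t_eq: "Stab_t n S0 t = TT (W t)"
proof (induction t)
  case 0 then show ?case by simp
next
  case (Suc t)
  have "gen (TT (W t) \<union> pshift (Suc t * n) ` S0) = TT (W (Suc t))"
  proof
    show "gen (TT (W t) \<union> pshift (Suc t * n) ` S0) \<subseteq> TT (W (Suc t))"
    proof (rule gen_TT_W, intro Un_least subsetI)
      fix x assume "x \<in> TT (W t)"
      then show "x \<in> TT (W (Suc t))" using W_Suc_mono unfolding TT_def by blast
    next
      fix x assume "x \<in> pshift (Suc t * n) ` S0"
      then obtain a b where "x = (0, sh (Suc t * n) a, sh (Suc t * n) b)" "a \<in> W 0" "b \<in> W 0"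
        unfolding TT_def by (auto simp: pshift_0a)
      then show "x \<in> TT (W (Suc t))" using sh_W unfolding TT_def by blast
    qed
  next
    show "TT (W (Suc t)) \<subseteq> gen (TT (W t) \<union> pshift (Suc t * n) ` S0)"
    proof
      fix z assume "z \<in> TT (W (Suc t))"
      then obtain a b where z: "z = (0, a, b)" "a \<in> W (Suc t)" "b \<in> W (Suc t)" unfolding TT_def by auto
      obtain x y where a: "a = (\<lambda>i. x i + sh (Suc t * n) y i)" "x \<in> W t" "y \<in> W 0"
        using z(2) W_Suc by auto
      obtain x' y' where b: "b = (\<lambda>i. x' i + sh (Suc t * n) y' i)" "x' \<in> W t" "y' \<in> W 0"
        using z(3) W_Suc by auto
      have L: "x \<in> L" "x' \<in> L" "sh (Suc t * n) y \<in> L" "sh (Suc t * n) y' \<in> L"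
        using a b sh_W W_L by blast+
      have "pmult (0, x, x') (0, sh (Suc t * n) y, sh (Suc t * n) y') = (0, a, b)"
        unfolding pmult_TT[OF L(1,2,3,4)] a b by simp
      then have "z = pmult (0, x, x') (0, sh (Suc t * n) y, sh (Suc t * n) y')"
        using z by simp
      moreover have "(0, x, x') \<in> gen (TT (W t) \<union> pshift (Suc t * n) ` S0)"
        using a b by (intro gen_base) (auto simp: TT_def)
      moreover have "(0, sh (Suc t * n) y, sh (Suc t * n) y') \<in> gen (TT (W t) \<union> pshift (Suc t * n) ` S0)"
        using a b by (intro gen_base UnI2 image_eqI[where x="(0, y, y')"]) (auto simp: TT_def pshift_0a)
      ultimately show "z \<in> gen (TT (W t) \<union> pshift (Suc t * n) ` S0)" by (simp add: gen_mult)
    qed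
  qed
  then show ?case using Suc by simp
qed

lemma Stab_t_sub_Stab: "Stab_t n S0 t \<subseteq> Stab n S0"
proof (induction t)
  case 0
  show ?case unfolding Stab_def
  proof
    fix x assume "x \<in> Stab_t n S0 0"
    then have "x \<in> pshift (0 * n) ` S0" by (intro image_eqI[where x=x]) simp_all
    then have "x \<in> (\<Union>t. pshift (t * n) ` S0)" by blast
    then show "x \<in> gen (\<Union>t. pshift (t * n) ` S0)" by (auto intro: gen_base)
  qed
next
  case (Suc t)
  have "pshift (Suc t * n) ` S0 \<subseteq> (\<Union>t. pshift (t * n) ` S0)" by blast
  then have "pshift (Suc t * n) ` S0 \<subseteq> gen (\<Union>t. pshift (t * n) ` S0)" using gen_incl by blast
  then have "Stab_t n S0 t \<union> pshift (Suc t * n) ` S0 \<subseteq> gen (\<Union>t. pshift (t * n) ` S0)"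
    using Suc by (auto simp: Stab_def)
  then have "gen (Stab_t n S0 t \<union> pshift (Suc t * n) ` S0) \<subseteq> Stab n S0"
    unfolding Stab_def by (rule gen_sub)
  then show ?case by simp
qed

lemma Stab_eq: "Stab n S0 = TT L"
proof
  show "Stab n S0 \<subseteq> TT L" unfolding Stab_def
  proof (rule gen_TT_L, rule subsetI)
    fix z assume "z \<in> (\<Union>t. pshift (t * n) ` S0)"
    then obtain t x where zx: "z = pshift (t * n) x" "x \<in> S0" by blast
    then obtain a b where "x = (0, a, b)" "a \<in> W 0" "b \<in> W 0" unfolding TT_def by auto
    then show "z \<in> TT L" using sh_W W_L zx by (auto simp: pshift_0a TT_def)
  qed
next
  show "TT L \<subseteq> Stab n S0"
  proof
    fix z assume "z \<in> TT L"
    then obtain a b where z: "z = (0, a, b)" "a \<in> L" "b \<in> L" unfolding TT_def by auto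
    then obtain t t' where "a \<in> W t" "b \<in> W t'" unfolding L_def by auto
    then have "a \<in> W (max t t')" "b \<in> W (max t t')" using W_mono[of t "max t t'"] W_mono[of t' "max t t'"] by auto
    then have "z \<in> TT (W (max t t'))" using z by (auto simp: TT_def)
    then have "z \<in> Stab_t n S0 (max t t')" by (simp only: Stab_t_eq)
    then show "z \<in> Stab n S0" using Stab_t_sub_Stab by blast
  qed
qed


lemma pvec_TT: "pvec ` TT V = V \<times> V"
  unfolding TT_def pvec_def by (auto simp: image_iff)

lemma conv_stab: "conv_stab_code n k m S0"
  unfolding conv_stab_code_def
proof (intro conjI allI impI ballI)
  show "S0 \<subseteq> paulis_on (n + m)"
  proof
    fix x assume "x \<in> S0"
    then obtain a b where x: "x = (0, a, b)" "a \<in> W 0" "b \<in> W 0" unfolding TT_def by auto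
    have "psupp x \<subseteq> {..<n + m}" using x W_supp[of _ 0] by (fastforce simp: psupp_def)
    moreover have "x \<in> P_inf" using x W_fsupp ff_CHAR_pos[where 'a='a] by (auto simp: P_inf_def)
    ultimately show "x \<in> paulis_on (n + m)" by (simp add: paulis_on_def)
  qed
next
  show "gen S0 = S0" using gen_TT_W[OF subset_refl] gen_incl by blast
next
  fix x y assume "x \<in> S0" "y \<in> S0"
  then show "pmult x y = pmult y x" using TT_comm W_L unfolding TT_def by blast
next
  fix t :: nat and M N assume "1 \<le> t" "M \<in> S0" "N \<in> S0"
  then obtain a b where M: "M = (0, a, b)" "a \<in> W 0" "b \<in> W 0" unfolding TT_def by auto
  have "pshift (t * n) M \<in> TT L" using M sh_W W_L by (auto simp: pshift_0a TT_def)
  moreover have "N \<in> TT L" using `N \<in> S0` W_L unfolding TT_def by blast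
  ultimately show "pmult (pshift (t * n) M) N = pmult N (pshift (t * n) M)" by (rule TT_comm)
next
  fix t
  show "fq_dim_eq (Stab_t n S0 t) ((t + 1) * (n - k))"
    unfolding fq_dim_eq_def Stab_t_eq pvec_TT
  proof (intro conjI allI ballI)
    fix l :: 'a and v assume "v \<in> W t \<times> W t"
    then show "(\<lambda>i. l * fst v i, \<lambda>i. l * snd v i) \<in> W t \<times> W t" using W_scale by auto
  next
    have "card (W t \<times> W t) = CARD('a) ^ ((t + 1) * k') * CARD('a) ^ ((t + 1) * k')"
      by (simp add: card_cartesian_product W_card)
    also have "\<dots> = CARD('a) ^ ((t + 1) * k' + (t + 1) * k')" by (simp only: power_add)
    also have "(t + 1) * k' + (t + 1) * k' = (t + 1) * (n - k)" by (simp add: nk)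
    finally show "card (W t \<times> W t) = CARD('a) ^ ((t + 1) * (n - k))" .
  qed
next
  fix t
  show "Stab_t n S0 t \<inter> center_of (paulis_on ((t + 1) * n + m)) = {pone}"
    unfolding Stab_t_eq
  proof (intro equalityI subsetI)
    fix x assume x: "x \<in> TT (W t) \<inter> center_of (paulis_on ((t + 1) * n + m))"
    then obtain a b where "x = (0, a, b)" unfolding TT_def by auto
    then show "x \<in> {pone}" using center_paulis_on[of x] x by (auto simp: pone_def)
  next
    fix x assume "x \<in> {pone :: 'a pauli}"
    then have x: "x = pone" by simp
    have "pone \<in> TT (W t)" using W_zero by (auto simp: TT_def pone_def)
    moreover have "pone \<in> center_of (paulis_on ((t + 1) * n + m) :: 'a pauli set)"
      using pone_P_inf pone_comm by (auto simp: center_of_def paulis_on_def)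
    ultimately show "x \<in> TT (W t) \<inter> center_of (paulis_on ((t + 1) * n + m))" using x by simp
  qed
qed

lemma ZS_char: "{pmult z s | z s. z \<in> center_of P_inf \<and> s \<in> Stab n S0} = {(c, a, b) | c a b. c < CHAR('a) \<and> a \<in> L \<and> b \<in> L}"
  unfolding Stab_eq center_P_inf
proof (intro equalityI subsetI)
  fix x assume "x \<in> {pmult z s | z s. z \<in> {(c, \<lambda>_. 0, \<lambda>_. 0) | c. c < CHAR('a)} \<and> s \<in> TT L}"
  then obtain c a b where "x = pmult (c, \<lambda>_. 0, \<lambda>_. 0) (0, a, b)" "c < CHAR('a)" "a \<in> L" "b \<in> L"
    unfolding TT_def by auto
  then show "x \<in> {(c, a, b) | c a b. c < CHAR('a) \<and> a \<in> L \<and> b \<in> L}" by (auto simp: pmult_def)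
next
  fix x assume "x \<in> {(c, a, b) | c a b. c < CHAR('a) \<and> a \<in> L \<and> b \<in> L}"
  then obtain c a b where x: "x = (c, a, b)" "c < CHAR('a)" "a \<in> L" "b \<in> L" by auto
  then have "x = pmult (c, \<lambda>_. 0, \<lambda>_. 0) (0, a, b)" by (simp add: pmult_def)
  moreover have "(0, a, b) \<in> TT L" using x by (auto simp: TT_def)
  ultimately show "x \<in> {pmult z s | z s. z \<in> {(c, \<lambda>_. 0, \<lambda>_. 0) | c. c < CHAR('a)} \<and> s \<in> TT L}"
    using x by blast
qed

lemma dual_scale_arg:
  assumes fa: "fsupp a" and H: "\<And>l. tr (l * ipv a w) = (0::'a)"
  shows "ipv a w = 0"
proof (rule ccontr)
  assume ne: "ipv a w \<noteq> 0"
  obtain z :: 'a where z: "tr z \<noteq> 0" using tr_nonzero by blast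
  have "tr (z / ipv a w * ipv a w) = 0" by (rule H)
  then show False using ne z by simp
qed

lemma cent_char: "centralizer_in P_inf (Stab n S0) = {(c, a, b) | c a b. c < CHAR('a) \<and> a \<in> edual L \<and> b \<in> edual L}"
  unfolding Stab_eq
proof (intro equalityI subsetI)
  fix x assume x: "x \<in> centralizer_in P_inf (TT L)"
  then obtain c a b where xe: "x = (c, a, b)" "c < CHAR('a)" "fsupp a" "fsupp b"
    unfolding centralizer_in_def P_inf_def by auto
  have comm: "tr (dotp b a') = tr (dotp b' a)" if "a' \<in> L" "b' \<in> L" for a' b'
  proof -
    have "(0, a', b') \<in> TT L" using that by (auto simp: TT_def)
    then have "pmult x (0, a', b') = pmult (0, a', b') x" using x unfolding centralizer_in_def by blast
    then have "pmult (c, a, b) (0, a', b') = pmult (0, a', b') (c, a, b)" using xe(1) by simp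
    then show ?thesis by (simp only: pmult_comm_iff)
  qed
  have "ipv a w = 0" if w: "w \<in> L" for w
  proof (rule dual_scale_arg[OF xe(3)])
    fix l
    have "tr (dotp b (\<lambda>_. 0)) = tr (dotp (\<lambda>i. l * w i) a)" using comm L_zero L_scale[OF w] by blast
    then show "tr (l * ipv a w) = 0" using xe(3)
      by (simp add: tr_zero dotp_comm[of "\<lambda>i. l * w i"] dotp_ipv ipv_scale2)
  qed
  moreover have "ipv b w = 0" if w: "w \<in> L" for w
  proof (rule dual_scale_arg[OF xe(4)])
    fix l
    have "tr (dotp b (\<lambda>i. l * w i)) = tr (dotp (\<lambda>_. 0) a)" using comm L_zero L_scale[OF w] by blast
    then show "tr (l * ipv b w) = 0" using xe(4)
      by (simp add: tr_zero dotp_ipv ipv_scale2)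
  qed
  ultimately show "x \<in> {(c, a, b) | c a b. c < CHAR('a) \<and> a \<in> edual L \<and> b \<in> edual L}"
    using xe by (auto simp: edual_ipv)
next
  fix x assume "x \<in> {(c, a, b) | c a b. c < CHAR('a) \<and> a \<in> edual L \<and> b \<in> edual L}"
  then obtain c a b where xe: "x = (c, a, b)" "c < CHAR('a)" "fsupp a" "fsupp b"
    "\<And>w. w \<in> L \<Longrightarrow> ipv a w = 0" "\<And>w. w \<in> L \<Longrightarrow> ipv b w = 0"
    by (auto simp: edual_ipv)
  have "x \<in> P_inf" using xe by (auto simp: P_inf_def)
  moreover have "pmult x s = pmult s x" if sT: "s \<in> TT L" for s
  proof -
    obtain a' b' where s: "s = (0, a', b')" "a' \<in> L" "b' \<in> L" using sT unfolding TT_def by auto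
    have "dotp b a' = 0" using xe s by (simp add: dotp_ipv)
    moreover have "dotp b' a = 0" using xe s by (simp add: dotp_comm[of b'] dotp_ipv)
    ultimately show ?thesis using xe s by (simp add: pmult_comm_iff)
  qed
  ultimately show "x \<in> centralizer_in P_inf (TT L)" by (auto simp: centralizer_in_def)
qed

lemma edual_zero: "(\<lambda>_. 0) \<in> edual L"
  by (simp add: edual_ipv fsupp_def)

lemma free_dist_eq: "free_dist n S0 = wt_set (edual L - L)"
  unfolding free_dist_def wt_set_def cent_char ZS_char
proof (rule inf_eq_nat)
  let ?X = "{(c, a, b) | c a b. c < CHAR('a) \<and> a \<in> edual L \<and> b \<in> edual L} - {(c, a, b) | c a b. c < CHAR('a) \<and> a \<in> L \<and> b \<in> L}"
  show "{seq_wt v |v. v \<in> edual L - L \<and> v \<noteq> (\<lambda>_. 0)} \<subseteq> pwt ` ?X"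
  proof
    fix y assume "y \<in> {seq_wt v |v. v \<in> edual L - L \<and> v \<noteq> (\<lambda>_. 0)}"
    then obtain v where v: "y = seq_wt v" "v \<in> edual L" "v \<notin> L" by auto
    have "(0, v, \<lambda>_. 0) \<in> ?X" using v edual_zero ff_CHAR_pos[where 'a='a] by auto
    moreover have "pwt (0, v, \<lambda>_. 0) = y" by (simp add: v pwt_def psupp_def seq_wt_def)
    ultimately show "y \<in> pwt ` ?X" by force
  qed
next
  fix y assume "y \<in> pwt ` ({(c, a, b) | c a b. c < CHAR('a) \<and> a \<in> edual L \<and> b \<in> edual L} - {(c, a, b) | c a b. c < CHAR('a) \<and> a \<in> L \<and> b \<in> L})"
  then obtain x where "y = pwt x" "x \<in> {(c, a, b) | c a b. c < CHAR('a) \<and> a \<in> edual L \<and> b \<in> edual L}"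
     "x \<notin> {(c, a, b) | c a b. c < CHAR('a) \<and> a \<in> L \<and> b \<in> L}" by blast
  then obtain c a b where x: "y = pwt (c, a, b)" "c < CHAR('a)" "a \<in> edual L" "b \<in> edual L" "a \<notin> L \<or> b \<notin> L"
    by blast
  have fs: "fsupp a" "fsupp b" using x by (auto simp: edual_ipv)
  have fin: "finite (psupp (c, a, b))" using fs by (rule psupp_fin)
  show "\<exists>z\<in>{seq_wt v |v. v \<in> edual L - L \<and> v \<noteq> (\<lambda>_. 0)}. z \<le> y"
  proof (cases "a \<notin> L")
    case True
    then have "a \<noteq> (\<lambda>_. 0)" using L_zero by auto
    moreover have "seq_wt a \<le> y" unfolding x(1) pwt_def seq_wt_def
      by (rule card_mono[OF fin]) (auto simp: psupp_def)
    ultimately show ?thesis using True x by blast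
  next
    case False
    then have bL: "b \<notin> L" using x by auto
    then have "b \<noteq> (\<lambda>_. 0)" using L_zero by auto
    moreover have "seq_wt b \<le> y" unfolding x(1) pwt_def seq_wt_def
      by (rule card_mono[OF fin]) (auto simp: psupp_def)
    ultimately show ?thesis using bL x by blast
  qed
qed

lemma pure:
  assumes "wt_set (edual L - L) = wt_set (edual L)"
  shows "pure_code n S0"
  unfolding pure_code_def
proof (intro ballI impI)
  fix s assume s: "s \<in> Stab n S0" "pwt s < free_dist n S0"
  have "s \<in> TT L" using s(1) Stab_eq by simp
  then obtain a b where se: "s = (0, a, b)" "a \<in> L" "b \<in> L" unfolding TT_def by auto
  have lt: "pwt s < wt_set (edual L)" using s assms free_dist_eq by simp
  have fin: "finite (psupp s)" unfolding se(1) using L_fsupp[OF se(2)] L_fsupp[OF se(3)] by (rule psupp_fin)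
  have "a = (\<lambda>_. 0)"
  proof (rule ccontr)
    assume "a \<noteq> (\<lambda>_. 0)"
    then have "seq_wt a \<in> {seq_wt v |v. v \<in> edual L \<and> v \<noteq> (\<lambda>_. 0)}" using se L_sub_dual by blast
    then have "wt_set (edual L) \<le> seq_wt a" unfolding wt_set_def by (rule cInf_lower) simp
    moreover have "seq_wt a \<le> pwt s" unfolding pwt_def seq_wt_def
      by (rule card_mono[OF fin]) (auto simp: psupp_def se)
    ultimately show False using lt by simp
  qed
  moreover have "b = (\<lambda>_. 0)"
  proof (rule ccontr)
    assume "b \<noteq> (\<lambda>_. 0)"
    then have "seq_wt b \<in> {seq_wt v |v. v \<in> edual L \<and> v \<noteq> (\<lambda>_. 0)}" using se L_sub_dual by blast
    then have "wt_set (edual L) \<le> seq_wt b" unfolding wt_set_def by (rule cInf_lower) simp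
    moreover have "seq_wt b \<le> pwt s" unfolding pwt_def seq_wt_def
      by (rule card_mono[OF fin]) (auto simp: psupp_def se)
    ultimately show False using lt by simp
  qed
  ultimately show "s \<in> center_of P_inf" using se ff_CHAR_pos[where 'a='a] by (simp add: center_P_inf)
qed

end

locale cls =
  fixes n k' \<mu> :: nat and G H :: "'a::{field,finite} poly mat"
  assumes n_pos: "0 < n" and G: "G \<in> carrier_mat k' n" and H: "H \<in> carrier_mat n k'"
    and GH: "G * H = 1\<^sub>m k'"
    and mu: "\<mu> = Max (insert 0 (row_deg G ` {..<k'}))"
begin

definition gsum :: "'a poly vec \<Rightarrow> nat \<Rightarrow> 'a poly" where
  "gsum u r = (\<Sum>l<k'. G $$ (l, r) * u $ l)"

definition Phi :: "'a poly vec \<Rightarrow> nat \<Rightarrow> 'a" where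
  "Phi u j = coeff (gsum u (j mod n)) (j div n)"

definition P :: "nat \<Rightarrow> 'a poly vec set" where
  "P t = {u \<in> carrier_vec k'. \<forall>i<k'. degree (u $ i) \<le> t}"

definition W :: "nat \<Rightarrow> (nat \<Rightarrow> 'a) set" where
  "W t = Phi ` P t"

lemma sigma_Phi: "u \<in> carrier_vec k' \<Longrightarrow> sigma n (transpose_mat G *\<^sub>v u) = Phi u"
proof
  fix j assume u: "u \<in> carrier_vec k'"
  have r: "j mod n < n" using n_pos by simp
  have "(transpose_mat G *\<^sub>v u) $ (j mod n) = gsum u (j mod n)"
    using G u r by (simp add: gsum_def scalar_prod_def row_def lessThan_atLeast0 mult.commute)
  then show "sigma n (transpose_mat G *\<^sub>v u) j = Phi u j"
    by (simp add: sigma_def Phi_def)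
qed

lemma gsum_add: "u \<in> carrier_vec k' \<Longrightarrow> v \<in> carrier_vec k' \<Longrightarrow> gsum (u + v) r = gsum u r + gsum v r"
  by (simp add: gsum_def distrib_left sum.distrib)

lemma Phi_add: "u \<in> carrier_vec k' \<Longrightarrow> v \<in> carrier_vec k' \<Longrightarrow> Phi (u + v) = (\<lambda>j. Phi u j + Phi v j)"
  by (rule ext) (simp add: Phi_def gsum_add)

lemma gsum_smult: "u \<in> carrier_vec k' \<Longrightarrow> gsum (a \<cdot>\<^sub>v u) r = a * gsum u r"
  by (simp add: gsum_def sum_distrib_left mult.left_commute)

lemma Phi_scale: "u \<in> carrier_vec k' \<Longrightarrow> Phi ([:l:] \<cdot>\<^sub>v u) = (\<lambda>j. l * Phi u j)"
  by (rule ext) (simp add: Phi_def gsum_smult)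

lemma Phi_shift: "u \<in> carrier_vec k' \<Longrightarrow> Phi (monom 1 s \<cdot>\<^sub>v u) = sh (s * n) (Phi u)"
proof
  fix j assume u: "u \<in> carrier_vec k'"
  have "Phi (monom 1 s \<cdot>\<^sub>v u) j = (if j div n < s then 0 else coeff (gsum u (j mod n)) (j div n - s))"
    using u by (simp add: Phi_def gsum_smult coeff_monom_mult)
  also have "\<dots> = sh (s * n) (Phi u) j"
  proof (cases "s * n \<le> j")
    case True
    then obtain r where j: "j = s * n + r" using le_Suc_ex by blast
    have "j div n = s + r div n" "j mod n = r mod n" using n_pos by (simp_all add: j)
    then show ?thesis using True by (simp add: sh_def Phi_def j)
  next
    case False
    then have "j div n < s" using n_pos by (metis div_less_iff_less_mult linorder_not_le)
    then show ?thesis using False by (simp add: sh_def)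
  qed
  finally show "Phi (monom 1 s \<cdot>\<^sub>v u) j = sh (s * n) (Phi u) j" .
qed

lemma Phi_zero: "Phi (0\<^sub>v k') = (\<lambda>_. 0)"
  by (rule ext) (simp add: Phi_def gsum_def)

lemma Phi_inj: "inj_on Phi (carrier_vec k')"
proof (rule inj_onI)
  fix u v assume u: "u \<in> carrier_vec k'" and v: "v \<in> carrier_vec k'" and eq: "Phi u = Phi v"
  have gs: "gsum u r = gsum v r" if r: "r < n" for r
  proof (rule poly_eqI)
    fix d
    have "Phi u (d * n + r) = Phi v (d * n + r)" using eq by simp
    then show "coeff (gsum u r) d = coeff (gsum v r) d" using r by (simp add: Phi_def)
  qed
  have "transpose_mat G *\<^sub>v u = transpose_mat G *\<^sub>v v"
  proof (rule eq_vecI)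
    fix r assume "r < dim_vec (transpose_mat G *\<^sub>v v)"
    then have r: "r < n" using G by simp
    have "(transpose_mat G *\<^sub>v u) $ r = gsum u r" "(transpose_mat G *\<^sub>v v) $ r = gsum v r"
      using G u v r by (simp_all add: gsum_def scalar_prod_def row_def lessThan_atLeast0 mult.commute)
    then show "(transpose_mat G *\<^sub>v u) $ r = (transpose_mat G *\<^sub>v v) $ r" using gs[OF r] by simp
  qed simp
  have Ht: "transpose_mat H \<in> carrier_mat k' n" using H by simp
  have Gt: "transpose_mat G \<in> carrier_mat n k'" using G by simp
  have HG: "transpose_mat H * transpose_mat G = 1\<^sub>m k'"
    using transpose_mult[OF G H] GH by simp
  have "u = (transpose_mat H * transpose_mat G) *\<^sub>v u" using u by (simp only: HG one_mult_mat_vec)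
  also have "\<dots> = transpose_mat H *\<^sub>v (transpose_mat G *\<^sub>v u)" by (rule assoc_mult_mat_vec[OF Ht Gt u])
  also have "\<dots> = transpose_mat H *\<^sub>v (transpose_mat G *\<^sub>v v)" by (simp only: \<open>transpose_mat G *\<^sub>v u = transpose_mat G *\<^sub>v v\<close>)
  also have "\<dots> = (transpose_mat H * transpose_mat G) *\<^sub>v v" by (rule assoc_mult_mat_vec[OF Ht Gt v, symmetric])
  also have "\<dots> = v" using v by (simp only: HG one_mult_mat_vec)
  finally show "u = v" .
qed

lemma P_carrier: "P t \<subseteq> carrier_vec k'"
  by (auto simp: P_def)

lemma P_Suc: "P (Suc t) = (\<lambda>(u, c). u + monom 1 (Suc t) \<cdot>\<^sub>v c) ` (P t \<times> P 0)"
proof (intro equalityI subsetI)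
  fix w assume w: "w \<in> P (Suc t)"
  let ?s = "Suc t"
  define u where "u = vec k' (\<lambda>i. w $ i - monom (coeff (w $ i) ?s) ?s)"
  define c where "c = vec k' (\<lambda>i. [:coeff (w $ i) ?s:])"
  have wc: "w \<in> carrier_vec k'" using w by (simp add: P_def)
  have "u \<in> P t" unfolding P_def
  proof (intro CollectI conjI allI impI)
    show "u \<in> carrier_vec k'" by (simp add: u_def)
  next
    fix i assume i: "i < k'"
    have ui: "u $ i = w $ i - monom (coeff (w $ i) ?s) ?s" using i by (simp add: u_def)
    have dw: "degree (w $ i) \<le> ?s" using w i by (simp add: P_def)
    have "\<forall>j>t. coeff (w $ i - monom (coeff (w $ i) ?s) ?s) j = 0"
    proof (intro allI impI)
      fix j assume j: "t < j"
      show "coeff (w $ i - monom (coeff (w $ i) ?s) ?s) j = 0"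
      proof (cases "j = ?s")
        case True then show ?thesis by (simp add: coeff_monom)
      next
        case False
        then have "degree (w $ i) < j" using dw j by simp
        then have "coeff (w $ i) j = 0" by (rule coeff_eq_0)
        then show ?thesis using False by (simp add: coeff_monom)
      qed
    qed
    then have "degree (w $ i - monom (coeff (w $ i) ?s) ?s) \<le> t" by (rule degree_le)
    then show "degree (u $ i) \<le> t" by (simp only: ui)
  qed
  moreover have "c \<in> P 0" by (simp add: P_def c_def)
  moreover have "w = u + monom 1 ?s \<cdot>\<^sub>v c"
  proof (rule eq_vecI)
    fix i assume "i < dim_vec (u + monom 1 ?s \<cdot>\<^sub>v c)"
    then have i: "i < k'" by (simp add: c_def)
    have "monom 1 ?s * [:coeff (w $ i) ?s:] = monom (coeff (w $ i) ?s) ?s"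
      by (rule poly_eqI) (simp add: coeff_monom_mult coeff_monom)
    then show "w $ i = (u + monom 1 ?s \<cdot>\<^sub>v c) $ i" using i by (simp add: u_def c_def)
  qed (use wc in \<open>simp add: c_def u_def\<close>)
  ultimately show "w \<in> (\<lambda>(u, c). u + monom 1 ?s \<cdot>\<^sub>v c) ` (P t \<times> P 0)"
    by (intro image_eqI[where x="(u, c)"]) simp_all
next
  fix w assume "w \<in> (\<lambda>(u, c). u + monom 1 (Suc t) \<cdot>\<^sub>v c) ` (P t \<times> P 0)"
  then obtain u c where w: "w = u + monom 1 (Suc t) \<cdot>\<^sub>v c" "u \<in> P t" "c \<in> P 0" by auto
  show "w \<in> P (Suc t)" unfolding P_def
  proof (intro CollectI conjI allI impI)
    show "w \<in> carrier_vec k'" using w by (auto simp: P_def)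
  next
    fix i assume i: "i < k'"
    have du: "degree (u $ i) \<le> Suc t" using w i by (auto simp: P_def)
    have "degree (monom 1 (Suc t) * c $ i) \<le> degree (monom (1::'a) (Suc t)) + degree (c $ i)"
      by (rule degree_mult_le)
    also have "\<dots> \<le> Suc t" using w i by (auto simp: P_def degree_monom_eq)
    finally show "degree (w $ i) \<le> Suc t" using w i du by (auto simp: P_def intro!: degree_add_le)
  qed
qed

lemma P_Suc_inj: "inj_on (\<lambda>(u, c). u + monom 1 (Suc t) \<cdot>\<^sub>v c) (P t \<times> P 0)"
proof (rule inj_onI, clarify)
  fix u c u' c' assume u: "u \<in> P t" and c: "c \<in> P 0" and u': "u' \<in> P t" and c': "c' \<in> P 0"
    and eq: "u + monom 1 (Suc t) \<cdot>\<^sub>v c = u' + monom 1 (Suc t) \<cdot>\<^sub>v c'"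
  have ci: "c $ i = c' $ i \<and> u $ i = u' $ i" if i: "i < k'" for i
  proof -
    have dc: "dim_vec c = k'" "dim_vec c' = k'" using c c' by (auto simp: P_def)
    have e: "u $ i + monom 1 (Suc t) * c $ i = u' $ i + monom 1 (Suc t) * c' $ i"
      using arg_cong[OF eq, of "\<lambda>v. v $ i"] i dc by simp
    have "coeff (u $ i) (Suc t) = 0" "coeff (u' $ i) (Suc t) = 0"
      using u u' i by (auto simp: P_def intro!: coeff_eq_0)
    then have "coeff (c $ i) 0 = coeff (c' $ i) 0"
      using arg_cong[OF e, of "\<lambda>p. coeff p (Suc t)"] by (simp add: coeff_monom_mult)
    moreover have "degree (c $ i) = 0" "degree (c' $ i) = 0" using c c' i by (auto simp: P_def)
    then have "c $ i = [:coeff (c $ i) 0:]" "c' $ i = [:coeff (c' $ i) 0:]" by (simp_all add: degree_0_id)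
    ultimately have cc: "c $ i = c' $ i" by metis
    then show ?thesis using e by simp
  qed
  have "dim_vec u = k'" "dim_vec u' = k'" "dim_vec c = k'" "dim_vec c' = k'"
    using u u' c c' by (auto simp: P_def)
  then show "u = u' \<and> c = c'"
    using ci by (auto intro!: eq_vecI)
qed

lemma card_P0: "card (P 0) = CARD('a) ^ k'"
proof -
  define F :: "(nat \<Rightarrow> 'a) \<Rightarrow> 'a poly vec" where "F f = vec k' (\<lambda>i. [:f i:])" for f
  have inj: "inj_on F ({..<k'} \<rightarrow>\<^sub>E UNIV)"
  proof (rule inj_onI)
    fix f g assume f: "f \<in> {..<k'} \<rightarrow>\<^sub>E UNIV" and g: "g \<in> {..<k'} \<rightarrow>\<^sub>E UNIV" and e: "F f = F g"
    show "f = g"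
    proof (rule PiE_ext[OF f g])
      fix i assume "i \<in> {..<k'}"
      then have "F f $ i = [:f i:]" "F g $ i = [:g i:]" by (simp_all add: F_def)
      then show "f i = g i" using e by simp
    qed
  qed
  have img: "F ` ({..<k'} \<rightarrow>\<^sub>E UNIV) = P 0"
  proof (intro equalityI subsetI)
    fix u assume "u \<in> F ` ({..<k'} \<rightarrow>\<^sub>E UNIV)"
    then obtain f where "u = F f" by blast
    then show "u \<in> P 0" unfolding P_def F_def by simp
  next
    fix u assume u: "u \<in> P 0"
    have du: "dim_vec u = k'" using u unfolding P_def by (blast dest: carrier_vecD)
    have e1: "F (restrict (\<lambda>i. coeff (u $ i) 0) {..<k'}) = u"
    proof (rule eq_vecI)
      fix i assume "i < dim_vec u"
      then have i: "i < k'" using du by simp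
      then have "degree (u $ i) = 0" using u by (simp add: P_def)
      then show "F (restrict (\<lambda>i. coeff (u $ i) 0) {..<k'}) $ i = u $ i"
        using i by (simp add: F_def degree_0_id)
    qed (simp add: F_def du)
    have e2: "restrict (\<lambda>i. coeff (u $ i) 0) {..<k'} \<in> {..<k'} \<rightarrow>\<^sub>E UNIV" by simp
    show "u \<in> F ` ({..<k'} \<rightarrow>\<^sub>E UNIV)" by (rule image_eqI[where f=F, OF e1[symmetric] e2])
  qed
  have "card (P 0) = card (F ` ({..<k'} \<rightarrow>\<^sub>E (UNIV :: 'a set)))" by (simp only: img)
  also have "\<dots> = card ({..<k'} \<rightarrow>\<^sub>E (UNIV :: 'a set))" by (rule card_image[OF inj])
  also have "\<dots> = (\<Prod>i<k'. card (UNIV :: 'a set))" by (rule card_PiE) simp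
  also have "\<dots> = CARD('a) ^ k'" by simp
  finally show ?thesis .
qed

lemma card_P: "card (P t) = CARD('a) ^ ((t + 1) * k')"
proof (induction t)
  case 0 then show ?case by (simp add: card_P0)
next
  case (Suc t)
  have "card (P (Suc t)) = card (P t \<times> P 0)"
    unfolding P_Suc by (rule card_image[OF P_Suc_inj])
  also have "\<dots> = CARD('a) ^ ((t + 1) * k') * CARD('a) ^ k'"
    by (simp add: card_cartesian_product Suc card_P0)
  also have "\<dots> = CARD('a) ^ ((t + 1) * k' + k')" by (simp only: power_add)
  also have "(t + 1) * k' + k' = (Suc t + 1) * k'" by simp
  finally show ?case .
qed

lemma row_deg_bound: "l < k' \<Longrightarrow> r < n \<Longrightarrow> degree (G $$ (l, r)) \<le> \<mu>"
proof -
  assume l: "l < k'" and r: "r < n"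
  have "{degree (G $$ (l, j)) | j. j < dim_col G} = (\<lambda>j. degree (G $$ (l, j))) ` {..<n}"
    using G by auto
  then have "degree (G $$ (l, r)) \<le> row_deg G l"
    unfolding row_deg_def using r by (auto intro!: Max_ge)
  also have "row_deg G l \<le> \<mu>" unfolding mu using l by (auto intro!: Max_ge)
  finally show ?thesis .
qed

lemma W_supp: "x \<in> W t \<Longrightarrow> x i \<noteq> 0 \<Longrightarrow> i < (t + 1) * n + n * \<mu>"
proof -
  assume x: "x \<in> W t" and xi: "x i \<noteq> 0"
  then obtain u where u: "u \<in> P t" "x = Phi u" by (auto simp: W_def)
  have r: "i mod n < n" using n_pos by simp
  have "degree (gsum u (i mod n)) \<le> \<mu> + t" unfolding gsum_def
  proof (rule degree_sum_le)
    fix l assume l: "l \<in> {..<k'}"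
    have "degree (G $$ (l, i mod n) * u $ l) \<le> degree (G $$ (l, i mod n)) + degree (u $ l)"
      by (rule degree_mult_le)
    also have "\<dots> \<le> \<mu> + t" using row_deg_bound[OF _ r, of l] l u by (auto simp: P_def intro: add_mono)
    finally show "degree (G $$ (l, i mod n) * u $ l) \<le> \<mu> + t" .
  qed simp
  moreover have "coeff (gsum u (i mod n)) (i div n) \<noteq> 0" using xi u by (simp add: Phi_def)
  ultimately have "i div n \<le> \<mu> + t" using le_degree order_trans by blast
  then have "i div n < t + 1 + \<mu>" by simp
  then have "i < (t + 1 + \<mu>) * n" using n_pos by (simp add: div_less_iff_less_mult)
  then show ?thesis by (simp add: algebra_simps)
qed

lemma carrier_UN_P: "carrier_vec k' = (\<Union>t. P t)"
proof (intro equalityI subsetI)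
  fix u :: "'a poly vec" assume u: "u \<in> carrier_vec k'"
  let ?t = "Max (insert 0 ((\<lambda>i. degree (u $ i)) ` {..<k'}))"
  have "u \<in> P ?t" using u by (auto simp: P_def intro!: Max_ge)
  then show "u \<in> (\<Union>t. P t)" by blast
qed (auto simp: P_def)


lemma P_dim: "u \<in> P t \<Longrightarrow> dim_vec u = k'"
  unfolding P_def by (blast dest: carrier_vecD)

lemma qsetup_inst:
  assumes nk: "n - k = 2 * k'"
    and orth: "\<And>v w. v \<in> Phi ` carrier_vec k' \<Longrightarrow> w \<in> Phi ` carrier_vec k' \<Longrightarrow> ipv v w = 0"
  shows "qsetup n (n * \<mu>) k k' (Phi ` carrier_vec k') W"
proof
  fix t
  have "0\<^sub>v k' \<in> P t" by (simp add: P_def)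
  then show "(\<lambda>_. 0) \<in> W t" unfolding W_def using Phi_zero by (metis image_eqI)
next
  fix x y t assume "x \<in> W t" "y \<in> W t"
  then obtain u v where uv: "x = Phi u" "y = Phi v" "u \<in> P t" "v \<in> P t" by (auto simp: W_def)
  have c: "u \<in> carrier_vec k'" "v \<in> carrier_vec k'" using uv P_carrier by auto
  have "u + v \<in> P t" unfolding P_def
  proof (intro CollectI conjI allI impI)
    show "u + v \<in> carrier_vec k'" using c by simp
  next
    fix i assume i: "i < k'"
    have "degree (u $ i) \<le> t" "degree (v $ i) \<le> t" using uv i by (auto simp: P_def)
    then show "degree ((u + v) $ i) \<le> t" using i c P_dim[OF uv(4)] by (simp add: degree_add_le)
  qed
  moreover have "(\<lambda>i. x i + y i) = Phi (u + v)" using Phi_add[OF c] uv by simp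
  ultimately show "(\<lambda>i. x i + y i) \<in> W t" by (simp add: W_def)
next
  fix x t and l :: 'a assume "x \<in> W t"
  then obtain u where u: "x = Phi u" "u \<in> P t" by (auto simp: W_def)
  have c: "u \<in> carrier_vec k'" using u P_carrier by auto
  have "[:l:] \<cdot>\<^sub>v u \<in> P t" unfolding P_def
  proof (intro CollectI conjI allI impI)
    show "[:l:] \<cdot>\<^sub>v u \<in> carrier_vec k'" using c by simp
  next
    fix i assume i: "i < k'"
    have "degree (u $ i) \<le> t" using u i by (auto simp: P_def)
    moreover have "degree ([:l:] * u $ i) \<le> degree [:l:] + degree (u $ i)" by (rule degree_mult_le)
    ultimately show "degree (([:l:] \<cdot>\<^sub>v u) $ i) \<le> t" using i P_dim[OF u(2)] by simp
  qed
  moreover have "(\<lambda>i. l * x i) = Phi ([:l:] \<cdot>\<^sub>v u)" using Phi_scale[OF c] u by simp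
  ultimately show "(\<lambda>i. l * x i) \<in> W t" by (simp add: W_def)
next
  fix t
  show "W (Suc t) = {\<lambda>i. x i + sh (Suc t * n) y i | x y. x \<in> W t \<and> y \<in> W 0}"
  proof (intro equalityI subsetI)
    fix z assume "z \<in> W (Suc t)"
    then obtain u c where z: "z = Phi (u + monom 1 (Suc t) \<cdot>\<^sub>v c)" "u \<in> P t" "c \<in> P 0"
      unfolding W_def P_Suc by auto
    have cc: "u \<in> carrier_vec k'" "c \<in> carrier_vec k'" "monom 1 (Suc t) \<cdot>\<^sub>v c \<in> carrier_vec k'"
      using z P_carrier by auto
    have "z = (\<lambda>i. Phi u i + sh (Suc t * n) (Phi c) i)"
      using z Phi_add[OF cc(1,3)] Phi_shift[OF cc(2)] by simp
    moreover have "Phi u \<in> W t" "Phi c \<in> W 0" using z by (auto simp: W_def)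
    ultimately show "z \<in> {\<lambda>i. x i + sh (Suc t * n) y i | x y. x \<in> W t \<and> y \<in> W 0}" by blast
  next
    fix z assume "z \<in> {\<lambda>i. x i + sh (Suc t * n) y i | x y. x \<in> W t \<and> y \<in> W 0}"
    then obtain u c where z: "z = (\<lambda>i. Phi u i + sh (Suc t * n) (Phi c) i)" "u \<in> P t" "c \<in> P 0"
      by (auto simp: W_def)
    have cc: "u \<in> carrier_vec k'" "c \<in> carrier_vec k'" "monom 1 (Suc t) \<cdot>\<^sub>v c \<in> carrier_vec k'"
      using z P_carrier by auto
    have "z = Phi (u + monom 1 (Suc t) \<cdot>\<^sub>v c)"
      using z Phi_add[OF cc(1,3)] Phi_shift[OF cc(2)] by simp
    moreover have "u + monom 1 (Suc t) \<cdot>\<^sub>v c \<in> P (Suc t)"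
      unfolding P_Suc using z by (intro image_eqI[where x="(u, c)"]) auto
    ultimately show "z \<in> W (Suc t)" by (simp add: W_def)
  qed
next
  fix x t i assume "x \<in> W t" "x i \<noteq> 0"
  then show "i < (t + 1) * n + n * \<mu>" by (rule W_supp)
next
  fix t
  have "card (W t) = card (P t)" unfolding W_def
    by (rule card_image) (rule inj_on_subset[OF Phi_inj P_carrier])
  then show "card (W t) = CARD('a) ^ ((t + 1) * k')" by (simp add: card_P)
next
  show "n - k = 2 * k'" by (rule nk)
next
  show "Phi ` carrier_vec k' = (\<Union>t. W t)" unfolding W_def carrier_UN_P by blast
next
  fix v w assume "v \<in> Phi ` carrier_vec k'" "w \<in> Phi ` carrier_vec k'"
  then show "ipv v w = 0" by (rule orth)
qed

end

lemma submatrix_map: "submatrix (map_mat f A) I J = map_mat f (submatrix A I J)"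
proof (rule eq_matI)
  fix i j assume i: "i < dim_row (map_mat f (submatrix A I J))" and j: "j < dim_col (map_mat f (submatrix A I J))"
  have i': "i < card {i. i < dim_row A \<and> i \<in> I}" and j': "j < card {j. j < dim_col A \<and> j \<in> J}"
    using i j by (simp_all add: dim_submatrix)
  have "pick I i < dim_row A" "pick J j < dim_col A" using pick_le i' j' by blast+
  then show "submatrix (map_mat f A) I J $$ (i, j) = map_mat f (submatrix A I J) $$ (i, j)"
    using i' j' by (simp add: submatrix_index dim_submatrix)
qed (simp_all add: dim_submatrix)

lemma decomp_ex:
  fixes emb :: "'a::{field,finite} \<Rightarrow> 'b::{field,finite}" and \<beta> :: 'b
  assumes card: "CARD('b) = CARD('a) ^ 2"
    and eadd: "\<And>x y. emb (x + y) = emb x + emb y"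
    and ind: "\<And>x y. \<beta> * emb x + \<beta> ^ CARD('a) * emb y = 0 \<Longrightarrow> x = 0 \<and> y = 0"
  shows "\<exists>x y. z = \<beta> * emb x + \<beta> ^ CARD('a) * emb y"
proof -
  define f where "f = (\<lambda>(x, y). \<beta> * emb x + \<beta> ^ CARD('a) * emb y)"
  have em: "emb (x - y) = emb x - emb y" for x y
    using eadd[of "x - y" y] by (simp add: algebra_simps)
  have "inj f"
  proof (rule injI)
    fix p q assume "f p = f q"
    obtain x y x' y' where pq: "p = (x, y)" "q = (x', y')" by fastforce
    have "\<beta> * emb (x - x') + \<beta> ^ CARD('a) * emb (y - y') = 0"
      using `f p = f q` pq by (simp add: f_def em algebra_simps)
    then show "p = q" using ind[of "x - x'" "y - y'"] pq by simp
  qed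
  then have "card (range f) = CARD('a \<times> 'a)" by (simp add: card_image)
  also have "\<dots> = CARD('b)" by (simp add: card power2_eq_square)
  finally have "range f = UNIV" by (intro card_eq_UNIV_imp_eq_UNIV) simp_all
  then obtain p where "z = f p" by (metis UNIV_I imageE)
  then show ?thesis by (cases p) (auto simp: f_def)
qed


lemma (in cls) qdeg:
  fixes emb :: "'a \<Rightarrow> 'b::{field,finite}" and \<beta> :: 'b and \<delta> :: nat
  assumes card: "CARD('b) = CARD('a) ^ 2" and inj: "inj emb" and e1: "emb 1 = 1"
    and eadd: "\<And>x y. emb (x + y) = emb x + emb y" and emul: "\<And>x y. emb (x * y) = emb x * emb y"
    and ind: "\<And>x y. \<beta> * emb x + \<beta> ^ CARD('a) * emb y = 0 \<Longrightarrow> x = 0 \<and> y = 0"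
    and d1: "\<delta> = (\<Sum>i<k'. row_deg G i)"
    and d2: "\<delta> = Max {degree (det (submatrix G {..<k'} J)) | J. J \<subseteq> {..<n} \<and> card J = k'}"
  shows "\<exists>k'' \<mu>' (M :: 'b poly vec set). is_conv_code n k'' \<delta> \<mu>' M \<and>
           sigma n ` M = tau emb \<beta> ` TT (Phi ` carrier_vec k')"
proof -
  have "emb 0 + emb 0 = emb 0" using eadd[of 0 0] by simp
  then have e0: "emb 0 = 0" by (simp only: add_cancel_left_right)
  have enz: "emb x \<noteq> 0" if "x \<noteq> 0" for x using inj that e0 by (metis injD)
  interpret E: comm_ring_hom emb by unfold_locales (simp_all add: e0 e1 eadd emul)
  interpret MP: map_poly_comm_ring_hom emb by unfold_locales (simp_all add: e0 e1 eadd emul)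
  let ?h = "map_poly emb"
  define G' where "G' = map_mat ?h G"
  define H' where "H' = map_mat ?h H"
  have G': "G' \<in> carrier_mat k' n" and H': "H' \<in> carrier_mat n k'" using G H by (auto simp: G'_def H'_def)
  have G'H': "G' * H' = 1\<^sub>m k'"
    unfolding G'_def H'_def using MP.mat_hom_mult[OF G H] GH MP.mat_hom_one by simp
  have degh: "degree (?h p) = degree p" for p using Polynomial.degree_map_poly[of emb p] enz by blast
  have G'e: "G' $$ (l, r) = ?h (G $$ (l, r))" if "l < k'" "r < n" for l r
    using that G by (simp add: G'_def)
  have rd: "row_deg G' l = row_deg G l" if l: "l < k'" for l
  proof -
    have dc: "dim_col G' = n" "dim_col G = n" using G G' by auto
    have "{degree (G' $$ (l, j)) | j. j < dim_col G'} = (\<lambda>j. degree (G' $$ (l, j))) ` {j. j < n}"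
      unfolding dc by (rule setcompr_eq_image)
    also have "\<dots> = (\<lambda>j. degree (G $$ (l, j))) ` {j. j < n}"
      by (rule image_cong) (simp_all add: G'e[OF l] degh)
    also have "\<dots> = {degree (G $$ (l, j)) | j. j < dim_col G}"
      unfolding dc by (rule setcompr_eq_image[symmetric])
    finally have "{degree (G' $$ (l, j)) | j. j < dim_col G'} = {degree (G $$ (l, j)) | j. j < dim_col G}" .
    then show ?thesis by (simp add: row_deg_def)
  qed
  have mu': "\<mu> = Max (insert 0 (row_deg G' ` {..<k'}))"
    unfolding mu using rd by (metis (no_types, lifting) image_cong lessThan_iff)
  have dets: "{degree (det (submatrix G' {..<k'} J)) | J. J \<subseteq> {..<n} \<and> card J = k'} =
              {degree (det (submatrix G {..<k'} J)) | J. J \<subseteq> {..<n} \<and> card J = k'}"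
    by (simp add: G'_def submatrix_map MP.hom_det degh)
  interpret C': cls n k' \<mu> G' H'
    by unfold_locales (use n_pos G' H' G'H' mu' in auto)
  define comb where "comb u1 u2 = vec k' (\<lambda>i. smult \<beta> (?h (u1 $ i)) + smult (\<beta> ^ CARD('a)) (?h (u2 $ i)))" for u1 u2 :: "'a poly vec"
  have comb_c: "comb u1 u2 \<in> carrier_vec k'" for u1 u2 by (simp add: comb_def)
  have comb_Phi: "C'.Phi (comb u1 u2) = tau emb \<beta> (0, Phi u1, Phi u2)"
    if u: "u1 \<in> carrier_vec k'" "u2 \<in> carrier_vec k'" for u1 u2
  proof
    fix j
    have r: "j mod n < n" using n_pos by simp
    have "C'.gsum (comb u1 u2) (j mod n) =
          (\<Sum>l<k'. smult \<beta> (?h (G $$ (l, j mod n) * u1 $ l)) + smult (\<beta> ^ CARD('a)) (?h (G $$ (l, j mod n) * u2 $ l)))"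
      unfolding C'.gsum_def
      by (intro sum.cong refl) (simp add: G'e r comb_def MP.hom_mult algebra_simps)
    also have "\<dots> = smult \<beta> (?h (gsum u1 (j mod n))) + smult (\<beta> ^ CARD('a)) (?h (gsum u2 (j mod n)))"
      by (simp add: gsum_def sum.distrib MP.hom_sum smult_sum2)
    finally show "C'.Phi (comb u1 u2) j = tau emb \<beta> (0, Phi u1, Phi u2) j"
      by (simp add: C'.Phi_def Phi_def tau_def e0)
  qed
  define dd where "dd z = (SOME p. z = \<beta> * emb (fst p) + \<beta> ^ CARD('a) * emb (snd p))" for z
  have dd: "z = \<beta> * emb (fst (dd z)) + \<beta> ^ CARD('a) * emb (snd (dd z))" for z
  proof -
    obtain x y where "z = \<beta> * emb x + \<beta> ^ CARD('a) * emb y" using decomp_ex[OF card eadd ind] by blast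
    then have "\<exists>p. z = \<beta> * emb (fst p) + \<beta> ^ CARD('a) * emb (snd p)" by (intro exI[of _ "(x, y)"]) simp
    then show ?thesis unfolding dd_def by (rule someI_ex)
  qed
  have dd0: "fst (dd 0) = 0" "snd (dd 0) = 0" using ind dd[of 0] by (metis)+
  have comb_surj: "\<exists>u1 u2. u1 \<in> carrier_vec k' \<and> u2 \<in> carrier_vec k' \<and> u = comb u1 u2"
    if u: "u \<in> carrier_vec k'" for u
  proof (intro exI conjI)
    show "map_vec (map_poly (\<lambda>z. fst (dd z))) u \<in> carrier_vec k'" "map_vec (map_poly (\<lambda>z. snd (dd z))) u \<in> carrier_vec k'"
      using u by simp_all
    show "u = comb (map_vec (map_poly (\<lambda>z. fst (dd z))) u) (map_vec (map_poly (\<lambda>z. snd (dd z))) u)"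
    proof (rule eq_vecI)
      fix i assume "i < dim_vec (comb (map_vec (map_poly (\<lambda>z. fst (dd z))) u) (map_vec (map_poly (\<lambda>z. snd (dd z))) u))"
      then have i: "i < dim_vec u" using u by (simp add: comb_def)
      show "u $ i = comb (map_vec (map_poly (\<lambda>z. fst (dd z))) u) (map_vec (map_poly (\<lambda>z. snd (dd z))) u) $ i"
      proof (rule poly_eqI)
        fix d
        show "coeff (u $ i) d = coeff (comb (map_vec (map_poly (\<lambda>z. fst (dd z))) u) (map_vec (map_poly (\<lambda>z. snd (dd z))) u) $ i) d"
          using i u dd[of "coeff (u $ i) d"] by (simp add: comb_def coeff_map_poly dd0 e0)
      qed
    qed (use u in \<open>simp add: comb_def\<close>)
  qed
  define M where "M = {transpose_mat G' *\<^sub>v u | u. u \<in> carrier_vec k'}"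
  have conv: "is_conv_code n k' \<delta> \<mu> M"
    unfolding is_conv_code_def
  proof (rule exI[of _ G'], intro conjI)
    show "G' \<in> carrier_mat k' n" by (rule G')
    show "\<exists>H. H \<in> carrier_mat n k' \<and> G' * H = 1\<^sub>m k'" using H' G'H' by blast
    show "M = {transpose_mat G' *\<^sub>v u |u. u \<in> carrier_vec k'}" by (simp add: M_def)
    show "\<delta> = (\<Sum>i<k'. row_deg G' i)" using d1 rd by simp
    show "\<delta> = Max {degree (det (submatrix G' {..<k'} J)) | J. J \<subseteq> {..<n} \<and> card J = k'}" using d2 dets by simp
    show "\<mu> = Max (insert 0 (row_deg G' ` {..<k'}))" by (rule mu')
  qed
  have img: "sigma n ` M = tau emb \<beta> ` TT (Phi ` carrier_vec k')"
  proof (intro equalityI subsetI)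
    fix x assume "x \<in> sigma n ` M"
    then obtain u where u: "u \<in> carrier_vec k'" "x = sigma n (transpose_mat G' *\<^sub>v u)" by (auto simp: M_def)
    obtain u1 u2 where uu: "u1 \<in> carrier_vec k'" "u2 \<in> carrier_vec k'" "u = comb u1 u2" using comb_surj[OF u(1)] by blast
    have "x = tau emb \<beta> (0, Phi u1, Phi u2)" using u uu C'.sigma_Phi comb_c comb_Phi by simp
    moreover have "(0, Phi u1, Phi u2) \<in> TT (Phi ` carrier_vec k')" using uu by (auto simp: TT_def)
    ultimately show "x \<in> tau emb \<beta> ` TT (Phi ` carrier_vec k')" by blast
  next
    fix x assume "x \<in> tau emb \<beta> ` TT (Phi ` carrier_vec k')"
    then obtain u1 u2 where uu: "u1 \<in> carrier_vec k'" "u2 \<in> carrier_vec k'" "x = tau emb \<beta> (0, Phi u1, Phi u2)"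
      by (auto simp: TT_def)
    then have "x = sigma n (transpose_mat G' *\<^sub>v comb u1 u2)" using C'.sigma_Phi comb_c comb_Phi by simp
    moreover have "transpose_mat G' *\<^sub>v comb u1 u2 \<in> M" using comb_c by (auto simp: M_def)
    ultimately show "x \<in> sigma n ` M" by blast
  qed
  show ?thesis using conv img by blast
qed

theorem mainTheorem5:
  fixes C :: "'a::{field,finite} poly vec set"
    and n k \<delta> \<mu> :: nat
    and emb :: "'a \<Rightarrow> 'b::{field,finite}" and \<beta> :: 'b
  assumes "0 < n" and "k \<le> n" and "even (n - k)"
    and "is_conv_code n ((n - k) div 2) \<delta> \<mu> C"
    and "sigma n ` C \<subseteq> edual (sigma n ` C)"
    and "CARD('b) = CARD('a) ^ 2"
    and "inj emb" and "emb 1 = 1"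
    and "\<And>x y. emb (x + y) = emb x + emb y" and "\<And>x y. emb (x * y) = emb x * emb y"
    and "\<And>x y. \<beta> * emb x + \<beta> ^ CARD('a) * emb y = 0 \<Longrightarrow> x = 0 \<and> y = 0"
  shows "\<exists>S0 :: 'a pauli set.
           conv_stab_code n k (n * \<mu>) S0 \<and>
           qdegree_is emb \<beta> n S0 \<delta> \<and>
           free_dist n S0 = wt_set (edual (sigma n ` C) - sigma n ` C) \<and>
           (wt_set (edual (sigma n ` C) - sigma n ` C) = wt_set (edual (sigma n ` C))
              \<longrightarrow> pure_code n S0)"
proof -
  define k' where "k' = (n - k) div 2"
  obtain G :: "'a poly mat" where G: "G \<in> carrier_mat k' n"
    and HH: "\<exists>H. H \<in> carrier_mat n k' \<and> G * H = 1\<^sub>m k'"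
    and C: "C = {transpose_mat G *\<^sub>v u | u. u \<in> carrier_vec k'}"
    and d1: "\<delta> = (\<Sum>i<k'. row_deg G i)"
    and d2: "\<delta> = Max {degree (det (submatrix G {..<k'} J)) | J. J \<subseteq> {..<n} \<and> card J = k'}"
    and mu: "\<mu> = Max (insert 0 (row_deg G ` {..<k'}))"
    using assms(4) unfolding is_conv_code_def k'_def by blast
  obtain H where H: "H \<in> carrier_mat n k'" and GH: "G * H = 1\<^sub>m k'" using HH by blast
  interpret cls n k' \<mu> G H by unfold_locales (use assms(1) G H GH mu in auto)
  have LC: "sigma n ` C = Phi ` carrier_vec k'"
  proof (intro equalityI subsetI)
    fix x assume "x \<in> sigma n ` C"
    then obtain u where "u \<in> carrier_vec k'" "x = sigma n (transpose_mat G *\<^sub>v u)" using C by blast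
    then show "x \<in> Phi ` carrier_vec k'" using sigma_Phi by auto
  next
    fix x assume "x \<in> Phi ` carrier_vec k'"
    then obtain u where u: "u \<in> carrier_vec k'" "x = Phi u" by blast
    then have "x = sigma n (transpose_mat G *\<^sub>v u)" using sigma_Phi by simp
    moreover have "transpose_mat G *\<^sub>v u \<in> C" using C u by blast
    ultimately show "x \<in> sigma n ` C" by blast
  qed
  have nk: "n - k = 2 * k'" using assms(3) unfolding k'_def by simp
  have orth: "ipv v w = 0" if "v \<in> Phi ` carrier_vec k'" "w \<in> Phi ` carrier_vec k'" for v w
    using assms(5) that unfolding LC edual_ipv by blast
  interpret Q: qsetup n "n * \<mu>" k k' "Phi ` carrier_vec k'" W by (rule qsetup_inst[OF nk orth])
  have qd: "qdegree_is emb \<beta> n Q.S0 \<delta>"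
    unfolding qdegree_is_def Q.Stab_eq using qdeg[OF assms(6-11) d1 d2] by blast
  show ?thesis
    using Q.conv_stab qd Q.free_dist_eq Q.pure unfolding LC by blast
qed

end
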